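(* There exists a function $f\colon \mathbb{R}_{>0} \to \mathbb{N}$ such that for every $\epsilon>0$ and every positive integer $k$, if $T$ is an $n$-vertex tournament with $n \geq 2k+1+\epsilon k$, then $\mathrm{sinv}_k(T) \leq f(\epsilon)$.
   Context: A tournament is an orientation of a complete graph. For a digraph $D$ and $X \subseteq V(D)$, inverting $X$ means reversing the direction of every arc of $D$ with both endvertices in $X$. A digraph $D$ is $k$-strong if $|V(D)|\ge k+1$ and $D-S$ is strongly connected for every $S\subseteq V(D)$ with $|S|<k$. $\mathrm{sinv}_k(D)$ is the minimum number of sets whose successive inversion transforms $D$ into a $k$-strong digraph. *)

theory Defs
  imports Complex_Main "HOL-Library.Extended_Nat"
begin

text \<open>A digraph is given by a vertex set V and an arc set A (pairs (u,v) meaning u -> v).\<close>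

definition tournament :: "'a set \<Rightarrow> ('a \<times> 'a) set \<Rightarrow> bool" where
  "tournament V A \<longleftrightarrow> A \<subseteq> V \<times> V \<and> (\<forall>v. (v, v) \<notin> A) \<and>
     (\<forall>u\<in>V. \<forall>v\<in>V. u \<noteq> v \<longrightarrow> ((u, v) \<in> A \<longleftrightarrow> (v, u) \<notin> A))"

definition invert :: "'a set \<Rightarrow> ('a \<times> 'a) set \<Rightarrow> ('a \<times> 'a) set" where
  "invert X A = {(u, v). (u, v) \<in> A \<and> \<not> (u \<in> X \<and> v \<in> X)}
              \<union> {(v, u) | u v. (u, v) \<in> A \<and> u \<in> X \<and> v \<in> X}"

definition invert_seq :: "'a set list \<Rightarrow> ('a \<times> 'a) set \<Rightarrow> ('a \<times> 'a) set" where
  "invert_seq Xs A = fold invert Xs A"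

definition strongly_connected :: "'a set \<Rightarrow> ('a \<times> 'a) set \<Rightarrow> bool" where
  "strongly_connected V A \<longleftrightarrow> (\<forall>u\<in>V. \<forall>v\<in>V. (u, v) \<in> (A \<inter> (V \<times> V))\<^sup>*)"

definition k_strong :: "nat \<Rightarrow> 'a set \<Rightarrow> ('a \<times> 'a) set \<Rightarrow> bool" where
  "k_strong k V A \<longleftrightarrow> card V \<ge> k + 1 \<and>
     (\<forall>S\<subseteq>V. card S < k \<longrightarrow> strongly_connected (V - S) (A \<inter> ((V - S) \<times> (V - S))))"

text \<open>sinv_k(D): minimum number of inversions (of subsets of V) making D k-strong;
  infinity if impossible.\<close>
definition sinv :: "nat \<Rightarrow> 'a set \<Rightarrow> ('a \<times> 'a) set \<Rightarrow> enat" where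
  "sinv k V A = Inf {enat (length Xs) | Xs. set Xs \<subseteq> Pow V \<and> k_strong k V (invert_seq Xs A)}"

end

theory Submission
  imports Defs "HOL-Library.FuncSet"
begin

lemma inv_mem: "(u,v) \<in> invert X A \<longleftrightarrow> (if u\<in>X \<and> v\<in>X then (v,u)\<in>A else (u,v)\<in>A)"
  by (auto simp: invert_def)

lemma fold_mem: "(u,v) \<in> fold invert Xs A \<longleftrightarrow>
   (if odd (length (filter (\<lambda>X. u\<in>X \<and> v\<in>X) Xs)) then (v,u)\<in>A else (u,v)\<in>A)"
proof (induction Xs arbitrary: A u v)
  case Nil then show ?case by simp
next
  case (Cons X Xs)
  show ?case using Cons.IH[where A="invert X A"] by (auto simp: inv_mem)
qed

lemma kstrong_suff:
  fixes V :: "'a set" and A and k s :: nat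
  assumes fin: "finite V" and kge: "k \<ge> 1" and cardV: "card V \<ge> k+1"
    and deg: "\<forall>u\<in>V. card {w\<in>V. (u,w)\<in>A} \<ge> k - 1 + s \<and> card {w\<in>V. (w,u)\<in>A} \<ge> k - 1 + s"
    and ex: "\<forall>P Q. P \<subseteq> V \<longrightarrow> Q \<subseteq> V \<longrightarrow> P \<inter> Q = {} \<longrightarrow> card P = s \<longrightarrow> card Q = s \<longrightarrow> (\<exists>a\<in>P. \<exists>b\<in>Q. (a,b)\<in>A)"
  shows "k_strong k V A"
  unfolding k_strong_def
proof (intro conjI cardV allI impI)
  fix S assume SV: "S \<subseteq> V" and cS: "card S < k"
  show "strongly_connected (V - S) (A \<inter> ((V - S) \<times> (V - S)))"
    unfolding strongly_connected_def
  proof (intro ballI)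
    fix u v assume u: "u \<in> V - S" and v: "v \<in> V - S"
    define E where "E = A \<inter> ((V - S) \<times> (V - S)) \<inter> ((V - S) \<times> (V - S))"
    define Nu where "Nu = {w\<in>V. (u,w)\<in>A} - S"
    define Nv where "Nv = {w\<in>V. (w,v)\<in>A} - S"
    have finS: "finite S" using SV fin finite_subset by blast
    have "card Nu \<ge> card {w\<in>V. (u,w)\<in>A} - card S" unfolding Nu_def by (rule diff_card_le_card_Diff) (use finS in auto)
    hence cNu: "card Nu \<ge> s" using deg u cS by force
    have "card Nv \<ge> card {w\<in>V. (w,v)\<in>A} - card S" unfolding Nv_def by (rule diff_card_le_card_Diff) (use finS in auto)
    hence cNv: "card Nv \<ge> s" using deg v cS by force
    have finNu: "finite Nu" "finite Nv" using fin unfolding Nu_def Nv_def by auto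
    show "(u, v) \<in> E\<^sup>*"
    proof (cases "Nu \<inter> Nv = {}")
      case False
      then obtain w where w: "w \<in> Nu" "w \<in> Nv" by blast
      have "(u,w) \<in> E" "(w,v) \<in> E" using w u v unfolding E_def Nu_def Nv_def by auto
      thus ?thesis by (meson converse_rtrancl_into_rtrancl r_into_rtrancl)
    next
      case True
      obtain P where P: "P \<subseteq> Nu" "card P = s" using obtain_subset_with_card_n[OF cNu] by metis
      obtain Q where Q: "Q \<subseteq> Nv" "card Q = s" using obtain_subset_with_card_n[OF cNv] by metis
      have "P \<subseteq> V" "Q \<subseteq> V" "P \<inter> Q = {}" using P Q True unfolding Nu_def Nv_def by auto
      then obtain a b where ab: "a \<in> P" "b \<in> Q" "(a,b) \<in> A" using ex P Q by metis
      have "(u,a) \<in> E" "(a,b) \<in> E" "(b,v) \<in> E" using ab P Q u v unfolding E_def Nu_def Nv_def by auto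
      thus ?thesis by (meson converse_rtrancl_into_rtrancl r_into_rtrancl)
    qed
  qed
qed

lemma k_strong_mono:
  assumes "k_strong k V A" "A \<subseteq> B" shows "k_strong k V B"
  using assms unfolding k_strong_def strongly_connected_def
  by (meson Int_mono order_refl rtrancl_mono subsetD)

lemma circ_step: "i < (n::nat) \<Longrightarrow> e < n \<Longrightarrow> ((i+e) mod n + n - i) mod n = e"
proof (cases "i + e < n")
  case True
  assume "i < n" "e < n"
  then show ?thesis using True by simp
next
  case False
  assume a: "i < n" "e < n"
  then have "(i+e) mod n = i + e - n" using False by (simp add: le_mod_geq)
  then show ?thesis using a False by simp
qed

lemma circ_kstrong:
  fixes V :: "'a set" and g :: "nat \<Rightarrow> 'a"
  assumes fin: "finite V" and g: "bij_betw g {0..<card V} V"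
    and kh: "k \<le> (card V - 1) div 2" and k1: "k \<ge> 1"
  shows "k_strong k V {(g i, g j) | i j. i < card V \<and> j < card V \<and> (j + card V - i) mod card V \<in> {1..(card V - 1) div 2}}"
    (is "k_strong k V ?R")
proof -
  define n where "n = card V"
  define h where "h = (n - 1) div 2"
  have kh': "k \<le> h" using kh unfolding h_def n_def .
  have gV: "\<And>i. i < n \<Longrightarrow> g i \<in> V" using g unfolding n_def bij_betw_def by auto
  have ginj: "\<And>i j. i < n \<Longrightarrow> j < n \<Longrightarrow> g i = g j \<Longrightarrow> i = j"
    using g unfolding n_def bij_betw_def inj_on_def by auto
  have gsurj: "\<And>v. v \<in> V \<Longrightarrow> \<exists>i<n. g i = v" using g unfolding n_def bij_betw_def
    by (metis (no_types, lifting) atLeastLessThan_iff imageE)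
  have hn: "h < n" "2*h < n" if "n > 0" using that unfolding h_def by auto
  have Rin: "(g i, g j) \<in> ?R" if "i < n" "j < n" "(j + n - i) mod n \<in> {1..h}" for i j
    using that unfolding n_def h_def by blast
  have Rin: "(g i, g j) \<in> ?R" if "i < n" "j < n" "(j + n - i) mod n \<in> {1..h}" for i j
    using that unfolding n_def h_def by blast
  show ?thesis unfolding k_strong_def
  proof (intro conjI allI impI)
    have "2 * ((card V - 1) div 2) \<le> card V - 1" by simp
    then show "k + 1 \<le> card V" using kh k1 by linarith
  next
    fix S assume SV: "S \<subseteq> V" and cS: "card S < k"
    define E where "E = ?R \<inter> ((V - S) \<times> (V - S)) \<inter> ((V - S) \<times> (V - S))"
    have claim: "\<forall>i<n. g i \<notin> S \<longrightarrow> g ((i+d) mod n) \<notin> S \<longrightarrow> (g i, g ((i+d) mod n)) \<in> E\<^sup>*"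
      if "d < n" for d
      using that
    proof (induction d rule: less_induct)
      case (less d)
      show ?case
      proof (intro allI impI)
        fix i assume i: "i < n" and gi: "g i \<notin> S" and gj: "g ((i+d) mod n) \<notin> S"
        have npos: "n > 0" using i by simp
        show "(g i, g ((i+d) mod n)) \<in> E\<^sup>*"
        proof (cases "d = 0")
          case True then show ?thesis using i by simp
        next
          case dnz: False
          show ?thesis
          proof (cases "d \<le> h")
            case True
            have "(g i, g ((i+d) mod n)) \<in> ?R"
              apply (rule Rin)
              using i less.prems dnz True circ_step[OF i less.prems] npos by auto
            moreover have "g i \<in> V" "g ((i+d) mod n) \<in> V" using gV i npos by auto
            ultimately have "(g i, g ((i+d) mod n)) \<in> E" unfolding E_def using gi gj by auto
            then show ?thesis by blast
          next
            case False
            define Im where "Im = (\<lambda>e. g ((i+e) mod n)) ` {1..h}"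
            have "inj_on (\<lambda>e. g ((i+e) mod n)) {1..h}"
            proof (rule inj_onI)
              fix e1 e2 assume e: "e1 \<in> {1..h}" "e2 \<in> {1..h}" "g ((i+e1) mod n) = g ((i+e2) mod n)"
              then have "(i+e1) mod n = (i+e2) mod n" using ginj npos by auto
              then have "((i+e1) mod n + n - i) mod n = ((i+e2) mod n + n - i) mod n" by simp
              then show "e1 = e2" using circ_step[OF i, of e1] circ_step[OF i, of e2] e hn npos by auto
            qed
            then have "card Im = h" unfolding Im_def by (simp add: card_image)
            then have "\<not> Im \<subseteq> S" using cS kh' SV fin
              by (metis card_mono finite_subset leD order_less_le_trans)
            then obtain e where e: "e \<in> {1..h}" "g ((i+e) mod n) \<notin> S" unfolding Im_def by blast
            define i' where "i' = (i+e) mod n"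
            have i': "i' < n" unfolding i'_def using npos by simp
            have ed: "e < d" using e False by auto
            have "(g i, g i') \<in> ?R"
              apply (rule Rin)
              using i i' e hn npos circ_step[OF i, of e] unfolding i'_def by auto
            moreover have "g i \<in> V" "g i' \<in> V" using gV i i' by auto
            ultimately have st1: "(g i, g i') \<in> E" unfolding E_def using gi e unfolding i'_def by auto
            have eq0: "((i+e) mod n + (d-e)) mod n = (i+e+(d-e)) mod n" by (rule mod_add_left_eq)
            have "i+e+(d-e) = i+d" using ed by simp
            then have eq: "(i' + (d - e)) mod n = (i+d) mod n" unfolding i'_def using eq0 by metis
            have de1: "d - e < d" using ed e by auto
            have de2: "d - e < n" using less.prems by auto
            have ih: "\<forall>j<n. g j \<notin> S \<longrightarrow> g ((j+(d-e)) mod n) \<notin> S \<longrightarrow> (g j, g ((j+(d-e)) mod n)) \<in> E\<^sup>*"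
              using less.IH[OF de1 de2] .
            have gi': "g i' \<notin> S" using e(2) unfolding i'_def .
            have gj': "g ((i' + (d-e)) mod n) \<notin> S" using gj eq by simp
            have "(g i', g ((i' + (d-e)) mod n)) \<in> E\<^sup>*" using ih i' gi' gj' by blast
            then show ?thesis using st1 eq by (metis converse_rtrancl_into_rtrancl)
          qed
        qed
      qed
    qed
    show "strongly_connected (V - S) (?R \<inter> ((V - S) \<times> (V - S)))"
      unfolding strongly_connected_def
    proof (intro ballI)
      fix u v assume u: "u \<in> V - S" and v: "v \<in> V - S"
      obtain i where i: "i < n" "g i = u" using gsurj u by auto
      obtain j where j: "j < n" "g j = v" using gsurj v by auto
      define d where "d = (j + n - i) mod n"
      have "d < n" unfolding d_def using i by simp
      have "(i + d) mod n = j" unfolding d_def using i j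
        by (simp add: mod_add_right_eq)
      then show "(u, v) \<in> (?R \<inter> ((V - S) \<times> (V - S)) \<inter> ((V - S) \<times> (V - S)))\<^sup>*"
        using claim[OF \<open>d < n\<close>] i j u v unfolding E_def by auto
    qed
  qed
qed

lemma tour_flip: "tournament V T \<Longrightarrow> u\<in>V \<Longrightarrow> v\<in>V \<Longrightarrow> u\<noteq>v \<Longrightarrow> (u,v)\<notin>T \<Longrightarrow> (v,u)\<in>T"
  unfolding tournament_def by blast

lemma reach_target:
  fixes V :: "'a set"
  assumes fin: "finite V" and tour: "tournament V T" and RV: "R \<subseteq> V \<times> V"
    and anti: "\<forall>u v. (u,v)\<in>R \<longrightarrow> (v,u)\<notin>R" 
  shows "\<exists>Xs. set Xs \<subseteq> Pow V \<and> length Xs \<le> 2 ^ card V \<and> R \<subseteq> invert_seq Xs T"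
proof -
  define D where "D = {{u,v} | u v. (u,v)\<in>R \<and> (u,v)\<notin>T}"
  have DV: "D \<subseteq> Pow V" using RV unfolding D_def by auto
  have finD: "finite D" using DV fin by (meson finite_Pow_iff finite_subset)
  obtain Xs where Xs: "distinct Xs" "set Xs = D" using finite_distinct_list[OF finD] by blast
  have len: "length Xs = card D" using Xs distinct_card by fastforce
  have "card D \<le> card (Pow V)" using DV fin by (simp add: card_mono)
  then have len2: "length Xs \<le> 2 ^ card V" using len fin by (simp add: card_Pow)
  have irr: "(v,v) \<notin> R" for v using anti by blast
  have "(u,v) \<in> invert_seq Xs T" if uv: "(u,v) \<in> R" for u v
  proof -
    have neq: "u \<noteq> v" using irr uv by blast
    have uvV: "u \<in> V" "v \<in> V" using RV uv by auto
    have cnt: "length (filter (\<lambda>X. u\<in>X \<and> v\<in>X) Xs) = card {X\<in>D. u\<in>X \<and> v\<in>X}"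
      using Xs by (simp add: distinct_length_filter Int_def conj_commute)
    have setq: "{X\<in>D. u\<in>X \<and> v\<in>X} = (if (u,v)\<notin>T then {{u,v}} else {})"
    proof -
      have 1: "X = {u,v}" if "X \<in> D" "u\<in>X" "v\<in>X" for X
      proof -
        obtain a b where "X = {a,b}" using \<open>X \<in> D\<close> unfolding D_def by blast
        then show ?thesis using that neq by auto
      qed
      have 2: "(u,v) \<notin> T" if "X \<in> D" "u\<in>X" "v\<in>X" for X
      proof -
        obtain a b where ab: "X = {a,b}" "(a,b) \<in> R" "(a,b) \<notin> T" using \<open>X \<in> D\<close> unfolding D_def by blast
        then have "{a,b} = {u,v}" using 1 that by blast
        then have "(a = u \<and> b = v) \<or> (a = v \<and> b = u)" by (simp add: doubleton_eq_iff)
        then show ?thesis using ab anti uv by blast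
      qed
      have 3: "{u,v} \<in> D" if "(u,v) \<notin> T" using that uv unfolding D_def by blast
      show ?thesis
      proof (cases "(u,v) \<in> T")
        case True
        have "{X\<in>D. u\<in>X \<and> v\<in>X} = {}" using 2 True by blast
        then show ?thesis using True by simp
      next
        case False
        have "{X\<in>D. u\<in>X \<and> v\<in>X} = {{u,v}}"
        proof (rule set_eqI)
          fix X show "X \<in> {X\<in>D. u\<in>X \<and> v\<in>X} \<longleftrightarrow> X \<in> {{u,v}}"
            using 1[of X] 3 False by auto
        qed
        then show ?thesis using False by simp
      qed
    qed
    show ?thesis
    proof (cases "(u,v) \<in> T")
      case True
      then show ?thesis unfolding invert_seq_def fold_mem using cnt setq by simp
    next
      case False
      then have "(v,u) \<in> T" using tour_flip[OF tour uvV neq] by blast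
      then show ?thesis unfolding invert_seq_def fold_mem using cnt setq False by simp
    qed
  qed
  then have "R \<subseteq> invert_seq Xs T" by auto
  then show ?thesis using DV Xs len2 by (intro exI[of _ Xs]) auto
qed

definition sdiff :: "'a set \<Rightarrow> 'a set \<Rightarrow> 'a set" where
  "sdiff a b = (a - b) \<union> (b - a)"

lemma card_sdiff: "finite a \<Longrightarrow> finite b \<Longrightarrow> card (sdiff a b) + 2 * card (a \<inter> b) = card a + card b"
proof -
  assume fa: "finite a" and fb: "finite b"
  have "card (a - b) + card (a \<inter> b) = card a" using fa
    by (subst card_Un_disjoint[symmetric]) (auto intro: arg_cong[where f=card])
  moreover have "card (b - a) + card (a \<inter> b) = card b" using fb
    by (subst card_Un_disjoint[symmetric]) (auto intro: arg_cong[where f=card])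
  moreover have "card (sdiff a b) = card (a - b) + card (b - a)" unfolding sdiff_def
    using fa fb by (subst card_Un_disjoint) auto
  ultimately show ?thesis by simp
qed

lemma sdiff_Int: "sdiff a b \<inter> x = sdiff (a \<inter> x) (b \<inter> x)"
  unfolding sdiff_def by auto

lemma parity_sdiff:
  assumes "finite x"
  shows "odd (card (sdiff a b \<inter> x)) \<longleftrightarrow> (odd (card (a \<inter> x)) \<noteq> odd (card (b \<inter> x)))"
proof -
  have f: "finite (a \<inter> x)" "finite (b \<inter> x)" using assms by auto
  have "card (sdiff (a \<inter> x) (b \<inter> x)) + 2 * card ((a \<inter> x) \<inter> (b \<inter> x)) = card (a \<inter> x) + card (b \<inter> x)"
    by (rule card_sdiff[OF f])
  then show ?thesis unfolding sdiff_Int by presburger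
qed

lemma sdiff_invol: "sdiff (sdiff a b) b = a"
  unfolding sdiff_def by auto

lemma sdiff_sub: "a \<subseteq> U \<Longrightarrow> b \<subseteq> U \<Longrightarrow> sdiff a b \<subseteq> U"
  unfolding sdiff_def by auto

lemma sum_zero_invol:
  fixes f :: "'a \<Rightarrow> int"
  assumes "bij_betw s A A" "\<And>x. x \<in> A \<Longrightarrow> f (s x) = - f x"
  shows "sum f A = 0"
proof -
  have "sum f A = sum (f \<circ> s) A" using sum.reindex_bij_betw[OF assms(1), of f] by simp
  also have "\<dots> = - sum f A" using assms(2) by (simp add: sum_negf)
  finally show ?thesis by simp
qed

lemma invol_bij: "(\<And>x. x \<in> A \<Longrightarrow> s x \<in> A) \<Longrightarrow> (\<And>x. x \<in> A \<Longrightarrow> s (s x) = x) \<Longrightarrow> bij_betw s A A"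
  by (rule bij_betw_byWitness[where f'=s]) auto

lemma char_sum_zero:
  assumes fU: "finite U" and wU: "w \<subseteq> U" and wne: "w \<noteq> {}"
  shows "(\<Sum>x\<in>Pow U. (-1::int) ^ card (w \<inter> x)) = 0"
proof -
  obtain i where i: "i \<in> w" using wne by blast
  have iU: "i \<in> U" using i wU by blast
  define s where "s x = sdiff x {i}" for x :: "'a set"
  have sA: "s x \<in> Pow U" if "x \<in> Pow U" for x using that iU unfolding s_def sdiff_def by auto
  have ss: "s (s x) = x" for x unfolding s_def by (rule sdiff_invol)
  have fw: "finite w" using fU wU finite_subset by blast
  have "odd (card (s x \<inter> w)) \<longleftrightarrow> (odd (card (x \<inter> w)) \<noteq> odd (card ({i} \<inter> w)))" for x
    unfolding s_def by (rule parity_sdiff[OF fw])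
  then have par: "odd (card (w \<inter> s x)) \<longleftrightarrow> \<not> odd (card (w \<inter> x))" for x using i
    by (simp add: Int_commute)
  show ?thesis
    apply (rule sum_zero_invol[OF invol_bij[of "Pow U" s]])
    using sA ss par by (auto simp: minus_one_power_iff)
qed

lemma char_sum_subspace_zero:
  assumes fU: "finite U" and WU: "W \<subseteq> Pow U"
    and cl: "\<And>a b. a \<in> W \<Longrightarrow> b \<in> W \<Longrightarrow> sdiff a b \<in> W"
    and w0: "w0 \<in> W" "odd (card (w0 \<inter> x))" and xU: "x \<subseteq> U"
  shows "(\<Sum>w\<in>W. (-1::int) ^ card (w \<inter> x)) = 0"
proof -
  define s where "s w = sdiff w w0" for w :: "'a set"
  have fx: "finite x" using fU xU finite_subset by blast
  have par: "odd (card (s w \<inter> x)) \<longleftrightarrow> \<not> odd (card (w \<inter> x))" for w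
    unfolding s_def using parity_sdiff[OF fx, of w w0] w0(2) by simp
  show ?thesis
    apply (rule sum_zero_invol[OF invol_bij[of W s]])
    using cl w0(1) par unfolding s_def by (auto simp: minus_one_power_iff sdiff_invol)
qed

lemma card_subspace_perp:
  assumes fU: "finite U" and WU: "W \<subseteq> Pow U" and W0: "{} \<in> W"
    and cl: "\<And>a b. a \<in> W \<Longrightarrow> b \<in> W \<Longrightarrow> sdiff a b \<in> W"
  shows "card W * card {x\<in>Pow U. \<forall>w\<in>W. even (card (w \<inter> x))} = 2 ^ card U"
proof -
  define Wp where "Wp = {x\<in>Pow U. \<forall>w\<in>W. even (card (w \<inter> x))}"
  have finW: "finite W" using WU fU by (meson finite_Pow_iff finite_subset)
  have "(\<Sum>x\<in>Pow U. \<Sum>w\<in>W. (-1::int) ^ card (w \<inter> x)) = (\<Sum>w\<in>W. \<Sum>x\<in>Pow U. (-1::int) ^ card (w \<inter> x))"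
    by (rule sum.swap)
  also have "\<dots> = (\<Sum>w\<in>W. if w = {} then 2 ^ card U else 0)"
  proof (rule sum.cong[OF refl])
    fix w assume w: "w \<in> W"
    show "(\<Sum>x\<in>Pow U. (-1::int) ^ card (w \<inter> x)) = (if w = {} then 2 ^ card U else 0)"
    proof (cases "w = {}")
      case True then show ?thesis using fU by (simp add: card_Pow)
    next
      case False then show ?thesis using char_sum_zero[OF fU _ False] w WU by auto
    qed
  qed
  also have "\<dots> = 2 ^ card U" using W0 finW by (simp add: sum.delta)
  finally have e1: "(\<Sum>x\<in>Pow U. \<Sum>w\<in>W. (-1::int) ^ card (w \<inter> x)) = 2 ^ card U" .
  have "(\<Sum>x\<in>Pow U. \<Sum>w\<in>W. (-1::int) ^ card (w \<inter> x)) = (\<Sum>x\<in>Pow U. if x \<in> Wp then int (card W) else 0)"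
  proof (rule sum.cong[OF refl])
    fix x assume x: "x \<in> Pow U"
    show "(\<Sum>w\<in>W. (-1::int) ^ card (w \<inter> x)) = (if x \<in> Wp then int (card W) else 0)"
    proof (cases "x \<in> Wp")
      case True
      then have "\<forall>w\<in>W. (-1::int) ^ card (w \<inter> x) = 1" unfolding Wp_def by auto
      then show ?thesis using True by simp
    next
      case False
      then obtain w0 where "w0 \<in> W" "odd (card (w0 \<inter> x))" using x unfolding Wp_def by auto
      then show ?thesis using char_sum_subspace_zero[OF fU WU cl] x False by auto
    qed
  qed
  also have "\<dots> = int (card W) * int (card Wp)"
  proof -
    have "Wp \<subseteq> Pow U" unfolding Wp_def by auto
    then have "(\<Sum>x\<in>Pow U. if x \<in> Wp then int (card W) else 0) = (\<Sum>x\<in>Wp. int (card W))"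
      using fU by (simp add: sum.If_cases Int_absorb1)
    then show ?thesis by simp
  qed
  finally have "int (card W) * int (card Wp) = 2 ^ card U" using e1 by simp
  then show ?thesis unfolding Wp_def[symmetric] by (metis of_nat_eq_iff of_nat_mult of_nat_numeral of_nat_power)
qed

lemma sol_bound:
  assumes fU: "finite U" and QU: "Q \<subseteq> Pow U" and SU: "Sol \<subseteq> Pow U"
    and cons: "\<And>c c' q. c \<in> Sol \<Longrightarrow> c' \<in> Sol \<Longrightarrow> q \<in> Q \<Longrightarrow> odd (card (c \<inter> q)) = odd (card (c' \<inter> q))"
  shows "card Sol * card Q \<le> 2 ^ card U"
proof (cases "Sol = {}")
  case True then show ?thesis by simp
next
  case False
  then obtain c0 where c0: "c0 \<in> Sol" by blast
  define W where "W = {w\<in>Pow U. \<forall>q\<in>Q. even (card (w \<inter> q))}"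
  have WU: "W \<subseteq> Pow U" unfolding W_def by auto
  have W0: "{} \<in> W" unfolding W_def by auto
  have cl: "sdiff a b \<in> W" if "a \<in> W" "b \<in> W" for a b
  proof -
    have "sdiff a b \<subseteq> U" using that sdiff_sub unfolding W_def by blast
    moreover have "even (card (sdiff a b \<inter> q))" if q: "q \<in> Q" for q
    proof -
      have fq: "finite q" using q QU fU finite_subset by blast
      show ?thesis using parity_sdiff[OF fq, of a b] \<open>a \<in> W\<close> \<open>b \<in> W\<close> q unfolding W_def by auto
    qed
    ultimately show ?thesis unfolding W_def by auto
  qed
  have finU: "finite (Pow U)" using fU by simp
  have QWp: "Q \<subseteq> {x\<in>Pow U. \<forall>w\<in>W. even (card (w \<inter> x))}"
    using QU unfolding W_def by (auto simp: Int_commute)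
  have c1: "card Q \<le> card {x\<in>Pow U. \<forall>w\<in>W. even (card (w \<inter> x))}"
    by (rule card_mono[OF _ QWp]) (use finU in auto)
  have inj: "inj_on (\<lambda>c. sdiff c c0) Sol"
    by (rule inj_on_inverseI[where g = "\<lambda>c. sdiff c c0"]) (simp add: sdiff_invol)
  have img: "(\<lambda>c. sdiff c c0) ` Sol \<subseteq> W"
  proof
    fix y assume "y \<in> (\<lambda>c. sdiff c c0) ` Sol"
    then obtain c where c: "c \<in> Sol" "y = sdiff c c0" by blast
    have "y \<subseteq> U" using c c0 SU sdiff_sub by blast
    moreover have "even (card (y \<inter> q))" if q: "q \<in> Q" for q
    proof -
      have fq: "finite q" using q QU fU finite_subset by blast
      show ?thesis using parity_sdiff[OF fq, of c c0] cons[OF c(1) c0 q] c(2) by simp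
    qed
    ultimately show "y \<in> W" unfolding W_def by auto
  qed
  have c2: "card Sol \<le> card W"
    using card_inj_on_le[OF inj img] WU finU finite_subset by blast
  have "card Sol * card Q \<le> card W * card {x\<in>Pow U. \<forall>w\<in>W. even (card (w \<inter> x))}"
    using c1 c2 by (simp add: mult_le_mono)
  also have "\<dots> = 2 ^ card U" by (rule card_subspace_perp[OF fU WU W0 cl])
  finally show ?thesis .
qed

lemma count_odd_even:
  assumes fU: "finite U" and cU: "c \<subseteq> U" and cne: "c \<noteq> {}"
  shows "card {d\<in>Pow U. odd (card (c \<inter> d))} = 2 ^ (card U - 1)"
    and "card {d\<in>Pow U. even (card (c \<inter> d))} = 2 ^ (card U - 1)"
proof -
  define Od where "Od = {d\<in>Pow U. odd (card (c \<inter> d))}"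
  define Ev where "Ev = {d\<in>Pow U. even (card (c \<inter> d))}"
  have fin: "finite Od" "finite Ev" using fU unfolding Od_def Ev_def by auto
  have un: "Od \<union> Ev = Pow U" "Od \<inter> Ev = {}" unfolding Od_def Ev_def by auto
  have "(\<Sum>x\<in>Pow U. (-1::int) ^ card (c \<inter> x)) = 0" by (rule char_sum_zero[OF fU cU cne])
  also have "(\<Sum>x\<in>Pow U. (-1::int) ^ card (c \<inter> x)) = (\<Sum>x\<in>Od. (-1::int) ^ card (c \<inter> x)) + (\<Sum>x\<in>Ev. (-1::int) ^ card (c \<inter> x))"
    using sum.union_disjoint[OF fin un(2)] un(1) by simp
  also have "(\<Sum>x\<in>Od. (-1::int) ^ card (c \<inter> x)) = - int (card Od)" unfolding Od_def by simp
  also have "(\<Sum>x\<in>Ev. (-1::int) ^ card (c \<inter> x)) = int (card Ev)" unfolding Ev_def by simp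
  finally have eq: "card Od = card Ev" by simp
  have "card Od + card Ev = 2 ^ card U" using card_Un_disjoint[OF fin un(2)] un(1) fU by (simp add: card_Pow)
  moreover have "card U \<noteq> 0" using cU cne fU by auto
  then obtain m where m: "card U = Suc m" using not0_implies_Suc by blast
  ultimately have "card Od = 2 ^ (card U - 1)" "card Ev = 2 ^ (card U - 1)" using eq by auto
  then show "card {d\<in>Pow U. odd (card (c \<inter> d))} = 2 ^ (card U - 1)"
    "card {d\<in>Pow U. even (card (c \<inter> d))} = 2 ^ (card U - 1)" unfolding Od_def Ev_def by auto
qed

lemma prod_if_pow:
  assumes "finite I"
  shows "(\<Prod>i\<in>I. if P i then (r::real) else 1) = r ^ card {i\<in>I. P i}"
proof -
  have "(\<Prod>i\<in>I. if P i then r else 1) = (\<Prod>i\<in>{i\<in>I. P i}. r)"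
    using prod.inter_filter[OF assms, of "\<lambda>_. r" P] by simp
  then show ?thesis by simp
qed

lemma gen_fun:
  assumes fI: "finite I" and fB: "\<And>i. i \<in> I \<Longrightarrow> finite (B i)"
  shows "(\<Sum>g\<in>PiE I B. (r::real) ^ card {i\<in>I. S i (g i)}) = (\<Prod>i\<in>I. \<Sum>b\<in>B i. if S i b then r else 1)"
proof -
  have "(\<Sum>g\<in>PiE I B. r ^ card {i\<in>I. S i (g i)}) = (\<Sum>g\<in>PiE I B. \<Prod>i\<in>I. if S i (g i) then r else 1)"
    using prod_if_pow[OF fI] by simp
  also have "\<dots> = (\<Prod>i\<in>I. \<Sum>b\<in>B i. if S i b then r else 1)"
    by (rule prod_sum_PiE[symmetric, OF fI fB])
  finally show ?thesis .
qed

lemma lower_tail: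
  assumes fI: "finite I" and fB: "\<And>i. i \<in> I \<Longrightarrow> finite (B i)" and r: "0 < r" "r \<le> (1::real)"
  shows "real (card {g\<in>PiE I B. card {i\<in>I. S i (g i)} < K}) * r ^ K \<le> (\<Prod>i\<in>I. \<Sum>b\<in>B i. if S i b then r else 1)"
proof -
  define G where "G = {g\<in>PiE I B. card {i\<in>I. S i (g i)} < K}"
  have finP: "finite (PiE I B)" using fI fB by (simp add: finite_PiE)
  have "real (card G) * r ^ K = (\<Sum>g\<in>G. r ^ K)" by simp
  also have "\<dots> \<le> (\<Sum>g\<in>G. r ^ card {i\<in>I. S i (g i)})"
    by (rule sum_mono) (use r in \<open>auto simp: G_def intro!: power_decreasing\<close>)
  also have "\<dots> \<le> (\<Sum>g\<in>PiE I B. r ^ card {i\<in>I. S i (g i)})"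
    by (rule sum_mono2[OF finP]) (use r in \<open>auto simp: G_def\<close>)
  also have "\<dots> = (\<Prod>i\<in>I. \<Sum>b\<in>B i. if S i b then r else 1)" by (rule gen_fun[OF fI fB])
  finally show ?thesis unfolding G_def .
qed

lemma upper_tail:
  assumes fI: "finite I" and fB: "\<And>i. i \<in> I \<Longrightarrow> finite (B i)" and r: "1 \<le> (r::real)"
  shows "real (card {g\<in>PiE I B. card {i\<in>I. S i (g i)} > K}) * r ^ (K+1) \<le> (\<Prod>i\<in>I. \<Sum>b\<in>B i. if S i b then r else 1)"
proof -
  define G where "G = {g\<in>PiE I B. card {i\<in>I. S i (g i)} > K}"
  have finP: "finite (PiE I B)" using fI fB by (simp add: finite_PiE)
  have "real (card G) * r ^ (K+1) = (\<Sum>g\<in>G. r ^ (K+1))" by simp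
  also have "\<dots> \<le> (\<Sum>g\<in>G. r ^ card {i\<in>I. S i (g i)})"
  proof (rule sum_mono)
    fix g assume "g \<in> G"
    then have "K + 1 \<le> card {i\<in>I. S i (g i)}" unfolding G_def by auto
    then show "r ^ (K+1) \<le> r ^ card {i\<in>I. S i (g i)}" using r by (rule power_increasing)
  qed
  also have "\<dots> \<le> (\<Sum>g\<in>PiE I B. r ^ card {i\<in>I. S i (g i)})"
    by (rule sum_mono2[OF finP]) (use r in \<open>auto simp: G_def\<close>)
  also have "\<dots> = (\<Prod>i\<in>I. \<Sum>b\<in>B i. if S i b then r else 1)" by (rule gen_fun[OF fI fB])
  finally show ?thesis unfolding G_def .
qed

lemma sum_if_count:
  assumes "finite A"
  shows "(\<Sum>b\<in>A. if P b then (r::real) else 1) = real (card A) - (1 - r) * real (card {b\<in>A. P b})"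
proof -
  have "(\<Sum>b\<in>A. if P b then r else 1) = (\<Sum>b\<in>A. 1 - (1 - r) * (if P b then 1 else 0))"
    by (rule sum.cong) auto
  also have "\<dots> = real (card A) - (1 - r) * (\<Sum>b\<in>A. if P b then 1 else 0)"
    by (simp add: sum_subtractf sum_distrib_left)
  also have "(\<Sum>b\<in>A. if P b then 1 else (0::real)) = real (card {b\<in>A. P b})"
    using assms by (simp add: sum.If_cases Int_def)
  finally show ?thesis .
qed

lemma deg_tail:
  fixes V :: "nat set" and L :: "nat set set"
  assumes fV: "finite V" and u: "u \<in> V" and fL: "finite L" and r: "0 < r" "r \<le> (1::real)"
    and Su: "\<And>c. c \<in> L \<Longrightarrow> \<not> S c u c"
    and Sw: "\<And>c w. c \<in> L \<Longrightarrow> w \<in> V \<Longrightarrow> w \<noteq> u \<Longrightarrow> card {d\<in>L. S c w d} \<ge> h"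
    and hL: "h \<le> card L"
  shows "real (card {l\<in>PiE V (\<lambda>_. L). card {w\<in>V. S (l u) w (l w)} < K}) * r ^ K
           \<le> real (card L) * (real (card L) - (1 - r) * real h) ^ (card V - 1)"
proof -
  define M where "M = real (card L) - (1 - r) * real h"
  have "(1-r) * real h \<le> real h" using r by (intro mult_left_le_one_le) auto
  then have M0: "M \<ge> 0" unfolding M_def using hL by linarith
  define Bc where "Bc c = (\<lambda>v. if v = u then {c} else L)" for c
  have sub: "{l\<in>PiE V (\<lambda>_. L). card {w\<in>V. S (l u) w (l w)} < K}
        \<subseteq> (\<Union>c\<in>L. {l\<in>PiE V (Bc c). card {w\<in>V. S c w (l w)} < K})"
  proof
    fix l assume l: "l \<in> {l\<in>PiE V (\<lambda>_. L). card {w\<in>V. S (l u) w (l w)} < K}"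
    then have "l u \<in> L" using u by (auto simp: PiE_iff)
    moreover have "l \<in> PiE V (Bc (l u))" using l unfolding Bc_def by (auto simp: PiE_iff)
    ultimately show "l \<in> (\<Union>c\<in>L. {l\<in>PiE V (Bc c). card {w\<in>V. S c w (l w)} < K})" using l by blast
  qed
  have fin2: "finite (\<Union>c\<in>L. {l\<in>PiE V (Bc c). card {w\<in>V. S c w (l w)} < K})"
  proof (rule finite_UN_I[OF fL])
    fix c assume "c \<in> L"
    have "finite (PiE V (Bc c))" using fL fV by (intro finite_PiE) (auto simp: Bc_def)
    then show "finite {l\<in>PiE V (Bc c). card {w\<in>V. S c w (l w)} < K}" by simp
  qed
  have each: "real (card {l\<in>PiE V (Bc c). card {w\<in>V. S c w (l w)} < K}) * r ^ K \<le> M ^ (card V - 1)"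
    if c: "c \<in> L" for c
  proof -
    have "real (card {l\<in>PiE V (Bc c). card {w\<in>V. S c w (l w)} < K}) * r ^ K
        \<le> (\<Prod>w\<in>V. \<Sum>d\<in>Bc c w. if S c w d then r else 1)"
      by (rule lower_tail[OF fV _ r]) (use fL in \<open>auto simp: Bc_def\<close>)
    also have "\<dots> = (\<Prod>w\<in>V - {u}. \<Sum>d\<in>Bc c w. if S c w d then r else 1) * (\<Sum>d\<in>Bc c u. if S c u d then r else 1)"
      using prod.remove[OF fV u] by (simp add: mult.commute)
    also have "\<dots> = (\<Prod>w\<in>V - {u}. \<Sum>d\<in>Bc c w. if S c w d then r else 1)" using Su[OF c] unfolding Bc_def by simp
    also have "(\<Prod>w\<in>V - {u}. \<Sum>d\<in>Bc c w. if S c w d then r else 1) \<le> (\<Prod>w\<in>V - {u}. M)"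
    proof (rule prod_mono)
      fix w assume w: "w \<in> V - {u}"
      have eq: "(\<Sum>d\<in>Bc c w. if S c w d then r else 1) = real (card L) - (1 - r) * real (card {d\<in>L. S c w d})"
        using w sum_if_count[OF fL] unfolding Bc_def by auto
      have "card {d\<in>L. S c w d} \<le> card L" using fL by (simp add: card_mono)
      moreover have "(1-r) * real (card {d\<in>L. S c w d}) \<le> real (card {d\<in>L. S c w d})"
        using r by (intro mult_left_le_one_le) auto
      ultimately have "0 \<le> real (card L) - (1 - r) * real (card {d\<in>L. S c w d})" by linarith
      moreover have "real (card L) - (1 - r) * real (card {d\<in>L. S c w d}) \<le> M"
        unfolding M_def using Sw[OF c, of w] w r by (simp add: mult_left_mono)
      ultimately show "0 \<le> (\<Sum>d\<in>Bc c w. if S c w d then r else 1) \<and> (\<Sum>d\<in>Bc c w. if S c w d then r else 1) \<le> M"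
        using eq by simp
    qed
    also have "(\<Prod>w\<in>V - {u}. M) = M ^ (card V - 1)" using fV u by simp
    finally show ?thesis .
  qed
  define F where "F c = {l\<in>PiE V (Bc c). card {w\<in>V. S c w (l w)} < K}" for c
  have rK: "0 \<le> r ^ K" using r by simp
  have c1: "card {l\<in>PiE V (\<lambda>_. L). card {w\<in>V. S (l u) w (l w)} < K} \<le> card (\<Union>c\<in>L. F c)"
    using card_mono[OF fin2 sub] unfolding F_def .
  have c2: "card (\<Union>c\<in>L. F c) \<le> (\<Sum>c\<in>L. card (F c))" by (rule card_UN_le[OF fL])
  have c3: "real (card {l\<in>PiE V (\<lambda>_. L). card {w\<in>V. S (l u) w (l w)} < K}) \<le> (\<Sum>c\<in>L. real (card (F c)))"
  proof -
    have "real (card {l\<in>PiE V (\<lambda>_. L). card {w\<in>V. S (l u) w (l w)} < K}) \<le> real (\<Sum>c\<in>L. card (F c))"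
      using c1 c2 by linarith
    then show ?thesis by simp
  qed
  have "real (card {l\<in>PiE V (\<lambda>_. L). card {w\<in>V. S (l u) w (l w)} < K}) * r ^ K
      \<le> (\<Sum>c\<in>L. real (card {l\<in>PiE V (Bc c). card {w\<in>V. S c w (l w)} < K})) * r ^ K"
    using mult_right_mono[OF c3 rK] unfolding F_def .
  also have "\<dots> = (\<Sum>c\<in>L. real (card {l\<in>PiE V (Bc c). card {w\<in>V. S c w (l w)} < K}) * r ^ K)"
    by (simp add: sum_distrib_right)
  also have "\<dots> \<le> (\<Sum>c\<in>L. M ^ (card V - 1))" by (rule sum_mono) (rule each)
  also have "\<dots> = real (card L) * M ^ (card V - 1)" by simp
  finally show ?thesis unfolding M_def .
qed

definition arcl :: "(nat \<times> nat) set \<Rightarrow> nat \<Rightarrow> nat \<Rightarrow> nat set \<Rightarrow> nat set \<Rightarrow> bool" where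
  "arcl T x y cx cy = (if odd (card (cx \<inter> cy)) then (y,x) \<in> T else (x,y) \<in> T)"

lemma class_tail:
  fixes V :: "nat set" and L :: "nat set set"
  assumes fV: "finite V" and fL: "finite L" and c: "c \<in> L"
  shows "real (card {l\<in>PiE V (\<lambda>_. L). card {v\<in>V. l v = c} > b}) * 2 ^ (b+1) \<le> (real (card L) + 1) ^ card V"
proof -
  have "real (card {l\<in>PiE V (\<lambda>_. L). card {v\<in>V. l v = c} > b}) * 2 ^ (b+1)
      \<le> (\<Prod>v\<in>V. \<Sum>d\<in>L. if d = c then 2 else 1)"
    by (rule upper_tail[OF fV]) (use fL in auto)
  also have "\<dots> = (\<Prod>v\<in>V. real (card L) + 1)"
  proof (rule prod.cong[OF refl])
    fix v
    have "(\<Sum>d\<in>L. if d = c then (2::real) else 1) = real (card L) - (1 - 2) * real (card {d\<in>L. d = c})"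
      by (rule sum_if_count[OF fL])
    also have "{d\<in>L. d = c} = {c}" using c by auto
    finally show "(\<Sum>d\<in>L. if d = c then (2::real) else 1) = real (card L) + 1" by simp
  qed
  also have "\<dots> = (real (card L) + 1) ^ card V" by simp
  finally show ?thesis .
qed

lemma tour_arc_iff:
  assumes "tournament V T" "a \<in> V" "y \<in> V" "a \<noteq> y"
  shows "\<not> arcl T a y ca cy \<longleftrightarrow> (odd (card (ca \<inter> cy)) \<longleftrightarrow> (a,y) \<in> T)"
proof -
  have "(y,a) \<in> T \<longleftrightarrow> (a,y) \<notin> T" using assms unfolding tournament_def by metis
  then show ?thesis unfolding arcl_def by auto
qed

lemma pair_bound:
  fixes V :: "nat set" and T
  assumes fV: "finite V" and tour: "tournament V T"
    and PV: "P \<subseteq> V" and QV: "Q \<subseteq> V" and PQ: "P \<inter> Q = {}" and cP: "card P = s" and cQ: "card Q = s"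
    and Ldef: "L = Pow {0..<t} - {{}}"
  shows "card {l\<in>PiE V (\<lambda>_. L). (\<forall>c. card {v\<in>Q. l v = c} \<le> b) \<and> (\<forall>a\<in>P. \<forall>y\<in>Q. \<not> arcl T a y (l a) (l y))} * s ^ s
         \<le> card L ^ (card V - s) * (2 ^ t * b) ^ s"
proof -
  define U where "U = {0..<(t::nat)}"
  have fU: "finite U" and cU: "card U = t" unfolding U_def by auto
  have LU: "L \<subseteq> Pow U" unfolding Ldef U_def by auto
  have fL: "finite L" using LU fU finite_subset by (metis finite_Pow_iff)
  define Sol where "Sol la a = {c\<in>L. \<forall>y\<in>Q. \<not> arcl T a y c (la y)}" for la :: "nat \<Rightarrow> nat set" and a
  define Good where "Good = {la\<in>PiE (V - P) (\<lambda>_. L). \<forall>c. card {v\<in>Q. la v = c} \<le> b}"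
  define B2 where "B2 = {l\<in>PiE V (\<lambda>_. L). (\<forall>c. card {v\<in>Q. l v = c} \<le> b) \<and> (\<forall>a\<in>P. \<forall>y\<in>Q. \<not> arcl T a y (l a) (l y))}"
  define merge where "merge = (\<lambda>p::(nat \<Rightarrow> nat set) \<times> (nat \<Rightarrow> nat set). (\<lambda>v. if v \<in> P then snd p v else fst p v))"
  have fP: "finite P" "finite Q" using PV QV fV finite_subset by auto
  have solb: "card (Sol la a) * s \<le> 2 ^ t * b" if lam: "la \<in> Good" and a: "a \<in> P" for la a
  proof -
    have lamQ: "la y \<in> L" if "y \<in> Q" for y using lam that PQ QV unfolding Good_def by (auto simp: PiE_iff)
    have QU: "la ` Q \<subseteq> Pow U" using lamQ LU by auto
    have SU: "Sol la a \<subseteq> Pow U" using LU unfolding Sol_def by auto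
    have aV: "a \<in> V" using a PV by auto
    have cons: "odd (card (c \<inter> q)) = odd (card (c' \<inter> q))"
      if hc: "c \<in> Sol la a" and hc': "c' \<in> Sol la a" and hq: "q \<in> la ` Q" for c c' q
    proof -
      obtain y where y: "y \<in> Q" "q = la y" using hq by blast
      have yV: "y \<in> V" and ay: "a \<noteq> y" using y QV PQ a by auto
      have "odd (card (c \<inter> q)) \<longleftrightarrow> (a,y) \<in> T"
        using hc y tour_arc_iff[OF tour aV yV ay] unfolding Sol_def by auto
      moreover have "odd (card (c' \<inter> q)) \<longleftrightarrow> (a,y) \<in> T"
        using hc' y tour_arc_iff[OF tour aV yV ay] unfolding Sol_def by auto
      ultimately show ?thesis by simp
    qed
    have sb: "card (Sol la a) * card (la ` Q) \<le> 2 ^ card U"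
      by (rule sol_bound[OF fU QU SU cons])
    have "Q \<subseteq> (\<Union>c\<in>la ` Q. {v\<in>Q. la v = c})" by auto
    then have "card Q \<le> card (\<Union>c\<in>la ` Q. {v\<in>Q. la v = c})"
      by (rule card_mono[rotated]) (use fP in auto)
    also have "\<dots> \<le> (\<Sum>c\<in>la ` Q. card {v\<in>Q. la v = c})" by (rule card_UN_le) (use fP in auto)
    also have "\<dots> \<le> (\<Sum>c\<in>la ` Q. b)" by (rule sum_mono) (use lam in \<open>auto simp: Good_def\<close>)
    also have "\<dots> = card (la ` Q) * b" by simp
    finally have "s \<le> card (la ` Q) * b" using cQ by simp
    then have "card (Sol la a) * s \<le> card (Sol la a) * (card (la ` Q) * b)" by simp
    also have "\<dots> = (card (Sol la a) * card (la ` Q)) * b" by simp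
    also have "\<dots> \<le> 2 ^ t * b" using sb cU by simp
    finally show ?thesis .
  qed
  have sub: "B2 \<subseteq> merge ` (SIGMA la:Good. PiE P (Sol la))"
  proof
    fix l assume l: "l \<in> B2"
    define la where "la = restrict l (V - P)"
    define \<mu> where "\<mu> = restrict l P"
    have lPi: "l \<in> PiE V (\<lambda>_. L)" using l unfolding B2_def by auto
    have "la \<in> Good"
    proof -
      have "la \<in> PiE (V - P) (\<lambda>_. L)" using lPi unfolding la_def by (auto simp: PiE_iff)
      moreover have "{v\<in>Q. la v = c} = {v\<in>Q. l v = c}" for c using PQ QV unfolding la_def by auto
      ultimately show ?thesis using l unfolding Good_def B2_def by auto
    qed
    moreover have "\<mu> \<in> PiE P (Sol la)"
    proof -
      have "\<mu> a \<in> Sol la a" if a: "a \<in> P" for a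
      proof -
        have "l a \<in> L" using lPi a PV by (auto simp: PiE_iff)
        moreover have "\<forall>y\<in>Q. \<not> arcl T a y (l a) (la y)"
          using l a PQ QV unfolding B2_def la_def by auto
        ultimately show ?thesis using a unfolding Sol_def \<mu>_def by auto
      qed
      then show ?thesis unfolding \<mu>_def by (auto simp: PiE_iff)
    qed
    moreover have "merge (la, \<mu>) = l"
    proof
      fix v show "merge (la, \<mu>) v = l v"
        using lPi PV unfolding merge_def la_def \<mu>_def by (auto simp: PiE_iff extensional_def)
    qed
    ultimately show "l \<in> merge ` (SIGMA la:Good. PiE P (Sol la))" by force
  qed
  have finPi: "finite (PiE (V - P) (\<lambda>_. L))" using fV fL by (intro finite_PiE) auto
  have fGood: "finite Good" unfolding Good_def using finPi by simp
  have fSol: "finite (PiE P (Sol la))" for la using fP fL unfolding Sol_def by (intro finite_PiE) auto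
  have "card B2 \<le> card (merge ` (SIGMA la:Good. PiE P (Sol la)))"
    by (rule card_mono[OF _ sub]) (use fGood fSol in auto)
  also have "\<dots> \<le> card (SIGMA la:Good. PiE P (Sol la))" by (rule card_image_le) (use fGood fSol in auto)
  also have "\<dots> = (\<Sum>la\<in>Good. card (PiE P (Sol la)))" using fGood fSol by simp
  also have "\<dots> = (\<Sum>la\<in>Good. \<Prod>a\<in>P. card (Sol la a))" using fP by (simp add: card_PiE)
  finally have cB: "card B2 \<le> (\<Sum>la\<in>Good. \<Prod>a\<in>P. card (Sol la a))" .
  have "card B2 * s ^ s \<le> (\<Sum>la\<in>Good. \<Prod>a\<in>P. card (Sol la a)) * s ^ s"
    using cB by simp
  also have "\<dots> = (\<Sum>la\<in>Good. \<Prod>a\<in>P. card (Sol la a) * s)"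
    using cP by (simp add: sum_distrib_right prod.distrib)
  also have "\<dots> \<le> (\<Sum>la\<in>Good. \<Prod>a\<in>P. 2 ^ t * b)"
    by (intro sum_mono prod_mono) (use solb in auto)
  also have "\<dots> = card Good * (2 ^ t * b) ^ s" using cP by simp
  also have "\<dots> \<le> card L ^ (card V - s) * (2 ^ t * b) ^ s"
  proof -
    have "card Good \<le> card (PiE (V - P) (\<lambda>_. L))"
      unfolding Good_def by (rule card_mono) (use finPi in auto)
    also have "card (PiE (V - P) (\<lambda>_. L)) = card L ^ (card V - s)"
      using fV PV cP by (simp add: card_PiE card_Diff_subset fP)
    finally show ?thesis by simp
  qed
  finally show ?thesis unfolding B2_def by simp
qed

lemma count_L:
  assumes Ldef: "L = Pow {0..<t} - {{}}" and c: "c \<in> L"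
  shows "card {d\<in>L. odd (card (c \<inter> d))} = 2 ^ (t - 1)"
    and "card {d\<in>L. even (card (c \<inter> d))} = 2 ^ (t - 1) - 1"
proof -
  have cU: "c \<subseteq> {0..<t}" "c \<noteq> {}" using c Ldef by auto
  have e1: "card {d\<in>Pow {0..<t}. odd (card (c \<inter> d))} = 2 ^ (t - 1)"
    using count_odd_even(1)[OF _ cU] by simp
  have e2: "card {d\<in>Pow {0..<t}. even (card (c \<inter> d))} = 2 ^ (t - 1)"
    using count_odd_even(2)[OF _ cU] by simp
  have "{d\<in>L. odd (card (c \<inter> d))} = {d\<in>Pow {0..<t}. odd (card (c \<inter> d))}" using Ldef by auto
  then show "card {d\<in>L. odd (card (c \<inter> d))} = 2 ^ (t - 1)" using e1 by simp
  have "{d\<in>L. even (card (c \<inter> d))} = {d\<in>Pow {0..<t}. even (card (c \<inter> d))} - {{}}" using Ldef by auto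
  moreover have "{} \<in> {d\<in>Pow {0..<t}. even (card (c \<inter> d))}" by simp
  ultimately show "card {d\<in>L. even (card (c \<inter> d))} = 2 ^ (t - 1) - 1" using e2 by simp
qed

lemma count_L_arc:
  assumes Ldef: "L = Pow {0..<t} - {{}}" and c: "c \<in> L"
  shows "card {d\<in>L. (if odd (card (c \<inter> d)) then A else \<not> A)} \<ge> 2 ^ (t - 1) - 1"
proof (cases A)
  case True
  then have "{d\<in>L. (if odd (card (c \<inter> d)) then A else \<not> A)} = {d\<in>L. odd (card (c \<inter> d))}" by auto
  then show ?thesis using count_L(1)[OF Ldef c] by simp
next
  case False
  then have "{d\<in>L. (if odd (card (c \<inter> d)) then A else \<not> A)} = {d\<in>L. even (card (c \<inter> d))}" by auto
  then show ?thesis using count_L(2)[OF Ldef c] by simp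
qed

lemma tour_irr: "tournament V T \<Longrightarrow> (v,v) \<notin> T" unfolding tournament_def by blast

lemma exists_good:
  fixes V :: "nat set" and T and r :: real
  assumes fV: "finite V" and tour: "tournament V T" and Ldef: "L = Pow {0..<t} - {{}}"
    and r: "0 < r" "r < 1" and s1: "s \<ge> 1" and t1: "t \<ge> 1"
    and H: "2 * real (card V) * (real (card L) * (real (card L) - (1 - r) * real (2 ^ (t - 1) - 1)) ^ (card V - 1) / r ^ K)
           + real (card L) * ((real (card L) + 1) ^ card V / 2 ^ (b+1))
           + 4 ^ card V * (real (card L ^ (card V - s) * (2 ^ t * b) ^ s) / real (s ^ s))
           < real (card L) ^ card V"
  shows "\<exists>l\<in>PiE V (\<lambda>_. L). (\<forall>u\<in>V. card {w\<in>V. arcl T u w (l u) (l w)} \<ge> K \<and> card {w\<in>V. arcl T w u (l w) (l u)} \<ge> K)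
           \<and> (\<forall>P Q. P \<subseteq> V \<longrightarrow> Q \<subseteq> V \<longrightarrow> P \<inter> Q = {} \<longrightarrow> card P = s \<longrightarrow> card Q = s \<longrightarrow> (\<exists>a\<in>P. \<exists>y\<in>Q. arcl T a y (l a) (l y)))"
proof -
  define n where "n = card V"
  define m where "m = card L"
  define h where "h = (2::nat) ^ (t - 1) - 1"
  define \<Omega> where "\<Omega> = PiE V (\<lambda>_. L)"
  have fL: "finite L" unfolding Ldef by simp
  have fO: "finite \<Omega>" unfolding \<Omega>_def using fV fL by (intro finite_PiE) auto
  have cO: "card \<Omega> = m ^ n" unfolding \<Omega>_def m_def n_def using fV by (simp add: card_PiE)
  define B1 where "B1 u = {l\<in>\<Omega>. card {w\<in>V. arcl T u w (l u) (l w)} < K}" for u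
  define B1' where "B1' u = {l\<in>\<Omega>. card {w\<in>V. arcl T w u (l w) (l u)} < K}" for u
  define B3 where "B3 c = {l\<in>\<Omega>. card {v\<in>V. l v = c} > b}" for c
  define PQs where "PQs = {(P,Q). P \<subseteq> V \<and> Q \<subseteq> V \<and> P \<inter> Q = {} \<and> card P = s \<and> card Q = s}"
  define B2 where "B2 PQ = {l\<in>\<Omega>. (\<forall>c. card {v\<in>snd PQ. l v = c} \<le> b) \<and> (\<forall>a\<in>fst PQ. \<forall>y\<in>snd PQ. \<not> arcl T a y (l a) (l y))}" for PQ
  have hL: "h \<le> m"
  proof -
    have c: "{0} \<in> L" unfolding Ldef using t1 by auto
    have "card {d\<in>L. even (card ({0} \<inter> d))} \<le> m" unfolding m_def using fL by (simp add: card_mono)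
    then show ?thesis using count_L(2)[OF Ldef c] unfolding h_def by simp
  qed
  have b1: "real (card (B1 u)) * r ^ K \<le> real m * (real m - (1 - r) * real h) ^ (n - 1)" if u: "u \<in> V" for u
  proof -
    have "real (card {l\<in>PiE V (\<lambda>_. L). card {w\<in>V. arcl T u w (l u) (l w)} < K}) * r ^ K
        \<le> real (card L) * (real (card L) - (1 - r) * real h) ^ (card V - 1)"
    proof (rule deg_tail[OF fV u fL r(1)])
      show "r \<le> 1" using r by simp
      show "\<not> arcl T u u c c" for c using tour_irr[OF tour] unfolding arcl_def by simp
      show "h \<le> card L" using hL unfolding m_def .
      fix c w assume c: "c \<in> L" and w: "w \<in> V" "w \<noteq> u"
      have "(w,u) \<in> T \<longleftrightarrow> (u,w) \<notin> T" using tour u w unfolding tournament_def by metis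
      then have "{d\<in>L. arcl T u w c d} = {d\<in>L. (if odd (card (c \<inter> d)) then (w,u) \<in> T else \<not> ((w,u) \<in> T))}"
        unfolding arcl_def by auto
      then show "h \<le> card {d\<in>L. arcl T u w c d}" using count_L_arc[OF Ldef c] unfolding h_def by simp
    qed
    then show ?thesis unfolding B1_def \<Omega>_def m_def n_def .
  qed
  have b1': "real (card (B1' u)) * r ^ K \<le> real m * (real m - (1 - r) * real h) ^ (n - 1)" if u: "u \<in> V" for u
  proof -
    have "real (card {l\<in>PiE V (\<lambda>_. L). card {w\<in>V. (\<lambda>c w d. arcl T w u d c) (l u) w (l w)} < K}) * r ^ K
        \<le> real (card L) * (real (card L) - (1 - r) * real h) ^ (card V - 1)"
    proof (rule deg_tail[OF fV u fL r(1)])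
      show "r \<le> 1" using r by simp
      show "\<not> (\<lambda>c w d. arcl T w u d c) c u c" for c using tour_irr[OF tour] unfolding arcl_def by simp
      show "h \<le> card L" using hL unfolding m_def .
      fix c w assume c: "c \<in> L" and w: "w \<in> V" "w \<noteq> u"
      have "(w,u) \<in> T \<longleftrightarrow> (u,w) \<notin> T" using tour u w unfolding tournament_def by metis
      then have "{d\<in>L. (\<lambda>c w d. arcl T w u d c) c w d} = {d\<in>L. (if odd (card (c \<inter> d)) then (u,w) \<in> T else \<not> ((u,w) \<in> T))}"
        unfolding arcl_def by (auto simp: Int_commute)
      then show "h \<le> card {d\<in>L. (\<lambda>c w d. arcl T w u d c) c w d}" using count_L_arc[OF Ldef c] unfolding h_def by simp
    qed
    then show ?thesis unfolding B1'_def \<Omega>_def m_def n_def by simp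
  qed
  have b3: "real (card (B3 c)) * 2 ^ (b+1) \<le> (real m + 1) ^ n" if c: "c \<in> L" for c
    using class_tail[OF fV fL c, of b] unfolding B3_def \<Omega>_def m_def n_def .
  have b2: "card (B2 PQ) * s ^ s \<le> m ^ (n - s) * (2 ^ t * b) ^ s" if PQ: "PQ \<in> PQs" for PQ
  proof -
    obtain P Q where PQe: "PQ = (P,Q)" by (cases PQ)
    have h: "P \<subseteq> V" "Q \<subseteq> V" "P \<inter> Q = {}" "card P = s" "card Q = s" using PQ PQe unfolding PQs_def by auto
    show ?thesis using pair_bound[OF fV tour h Ldef, of b] unfolding B2_def PQe \<Omega>_def m_def n_def by simp
  qed
  have cPQ: "card PQs \<le> 4 ^ n"
  proof -
    have "PQs \<subseteq> Pow V \<times> Pow V" unfolding PQs_def by auto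
    then have "card PQs \<le> card (Pow V \<times> Pow V)" by (rule card_mono[rotated]) (use fV in auto)
    also have "\<dots> = 4 ^ n" using fV unfolding n_def by (simp add: card_cartesian_product card_Pow power_mult_distrib[symmetric])
    finally show ?thesis .
  qed
  have fPQ: "finite PQs"
  proof (rule finite_subset)
    show "PQs \<subseteq> Pow V \<times> Pow V" unfolding PQs_def by auto
    show "finite (Pow V \<times> Pow V)" using fV by simp
  qed
  define Bad where "Bad = (\<Union>u\<in>V. B1 u) \<union> (\<Union>u\<in>V. B1' u) \<union> (\<Union>c\<in>L. B3 c) \<union> (\<Union>PQ\<in>PQs. B2 PQ)"
  have rK: "r ^ K > 0" using r by simp
  have s0: "real (s ^ s) > 0" using s1 by simp
  have cB1: "real (card (\<Union>u\<in>V. B1 u)) \<le> real n * (real m * (real m - (1 - r) * real h) ^ (n - 1) / r ^ K)"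
  proof -
    have "real (card (\<Union>u\<in>V. B1 u)) \<le> (\<Sum>u\<in>V. real (card (B1 u)))"
    proof -
      have "card (\<Union>u\<in>V. B1 u) \<le> (\<Sum>u\<in>V. card (B1 u))" by (rule card_UN_le[OF fV])
      then have "real (card (\<Union>u\<in>V. B1 u)) \<le> real (\<Sum>u\<in>V. card (B1 u))" by (simp only: of_nat_le_iff)
      then show ?thesis by simp
    qed
    also have "\<dots> \<le> (\<Sum>u\<in>V. real m * (real m - (1 - r) * real h) ^ (n - 1) / r ^ K)"
      by (rule sum_mono) (use b1 rK in \<open>simp add: pos_le_divide_eq\<close>)
    also have "\<dots> = real n * (real m * (real m - (1 - r) * real h) ^ (n - 1) / r ^ K)" unfolding n_def by simp
    finally show ?thesis .
  qed
  have cB1': "real (card (\<Union>u\<in>V. B1' u)) \<le> real n * (real m * (real m - (1 - r) * real h) ^ (n - 1) / r ^ K)"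
  proof -
    have "real (card (\<Union>u\<in>V. B1' u)) \<le> (\<Sum>u\<in>V. real (card (B1' u)))"
    proof -
      have "card (\<Union>u\<in>V. B1' u) \<le> (\<Sum>u\<in>V. card (B1' u))" by (rule card_UN_le[OF fV])
      then have "real (card (\<Union>u\<in>V. B1' u)) \<le> real (\<Sum>u\<in>V. card (B1' u))" by (simp only: of_nat_le_iff)
      then show ?thesis by simp
    qed
    also have "\<dots> \<le> (\<Sum>u\<in>V. real m * (real m - (1 - r) * real h) ^ (n - 1) / r ^ K)"
      by (rule sum_mono) (use b1' rK in \<open>simp add: pos_le_divide_eq\<close>)
    also have "\<dots> = real n * (real m * (real m - (1 - r) * real h) ^ (n - 1) / r ^ K)" unfolding n_def by simp
    finally show ?thesis .
  qed
  have cB3: "real (card (\<Union>c\<in>L. B3 c)) \<le> real m * ((real m + 1) ^ n / 2 ^ (b+1))"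
  proof -
    have "real (card (\<Union>c\<in>L. B3 c)) \<le> (\<Sum>c\<in>L. real (card (B3 c)))"
    proof -
      have "card (\<Union>c\<in>L. B3 c) \<le> (\<Sum>c\<in>L. card (B3 c))" by (rule card_UN_le[OF fL])
      then have "real (card (\<Union>c\<in>L. B3 c)) \<le> real (\<Sum>c\<in>L. card (B3 c))" by (simp only: of_nat_le_iff)
      then show ?thesis by simp
    qed
    also have "\<dots> \<le> (\<Sum>c\<in>L. (real m + 1) ^ n / 2 ^ (b+1))"
      by (rule sum_mono) (use b3 in \<open>simp add: pos_le_divide_eq\<close>)
    also have "\<dots> = real m * ((real m + 1) ^ n / 2 ^ (b+1))" unfolding m_def by simp
    finally show ?thesis .
  qed
  have cB2: "real (card (\<Union>PQ\<in>PQs. B2 PQ)) \<le> 4 ^ n * (real (m ^ (n - s) * (2 ^ t * b) ^ s) / real (s ^ s))"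
  proof -
    have "real (card (\<Union>PQ\<in>PQs. B2 PQ)) \<le> (\<Sum>PQ\<in>PQs. real (card (B2 PQ)))"
    proof -
      have "card (\<Union>PQ\<in>PQs. B2 PQ) \<le> (\<Sum>PQ\<in>PQs. card (B2 PQ))" by (rule card_UN_le[OF fPQ])
      then have "real (card (\<Union>PQ\<in>PQs. B2 PQ)) \<le> real (\<Sum>PQ\<in>PQs. card (B2 PQ))" by (simp only: of_nat_le_iff)
      then show ?thesis by simp
    qed
    also have "\<dots> \<le> (\<Sum>PQ\<in>PQs. real (m ^ (n - s) * (2 ^ t * b) ^ s) / real (s ^ s))"
    proof (rule sum_mono)
      fix PQ assume "PQ \<in> PQs"
      then have "real (card (B2 PQ) * s ^ s) \<le> real (m ^ (n - s) * (2 ^ t * b) ^ s)" using b2 of_nat_le_iff by blast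
      then show "real (card (B2 PQ)) \<le> real (m ^ (n - s) * (2 ^ t * b) ^ s) / real (s ^ s)"
        using s0 by (simp add: pos_le_divide_eq)
    qed
    also have "\<dots> = real (card PQs) * (real (m ^ (n - s) * (2 ^ t * b) ^ s) / real (s ^ s))" by simp
    also have "\<dots> \<le> 4 ^ n * (real (m ^ (n - s) * (2 ^ t * b) ^ s) / real (s ^ s))"
    proof (rule mult_right_mono)
      have "real (card PQs) \<le> real ((4::nat) ^ n)" using cPQ by (simp only: of_nat_le_iff)
      then show "real (card PQs) \<le> 4 ^ n" by simp
    qed simp
    finally show ?thesis .
  qed
  have "card Bad \<le> card (\<Union>u\<in>V. B1 u) + card (\<Union>u\<in>V. B1' u) + card (\<Union>c\<in>L. B3 c) + card (\<Union>PQ\<in>PQs. B2 PQ)"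
    unfolding Bad_def by (meson card_Un_le add_le_mono le_trans order_refl)
  then have "real (card Bad) \<le> real (card (\<Union>u\<in>V. B1 u) + card (\<Union>u\<in>V. B1' u) + card (\<Union>c\<in>L. B3 c) + card (\<Union>PQ\<in>PQs. B2 PQ))"
    by (simp only: of_nat_le_iff)
  also have "\<dots> = real (card (\<Union>u\<in>V. B1 u)) + real (card (\<Union>u\<in>V. B1' u)) + real (card (\<Union>c\<in>L. B3 c)) + real (card (\<Union>PQ\<in>PQs. B2 PQ))"
    by simp
  also have "\<dots> < real (card \<Omega>)"
  proof -
    define Y where "Y = real n * (real m * (real m - (1 - r) * real h) ^ (n - 1) / r ^ K)"
    have H': "2 * Y + real m * ((real m + 1) ^ n / 2 ^ (b+1))
           + 4 ^ n * (real (m ^ (n - s) * (2 ^ t * b) ^ s) / real (s ^ s)) < real m ^ n"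
      using H unfolding Y_def m_def[symmetric] n_def[symmetric] h_def[symmetric] by (simp add: mult.assoc)
    have "real (card \<Omega>) = real m ^ n" unfolding cO by simp
    then show ?thesis using cB1 cB1' cB3 cB2 H' unfolding Y_def[symmetric] by linarith
  qed
  finally have "card Bad < card \<Omega>" by simp
  moreover have "Bad \<subseteq> \<Omega>" unfolding Bad_def B1_def B1'_def B3_def B2_def by auto
  then have "finite Bad" using fO finite_subset by blast
  ultimately have "\<not> \<Omega> \<subseteq> Bad" using card_mono[of Bad \<Omega>] by linarith
  then obtain l where l: "l \<in> \<Omega>" "l \<notin> Bad" by blast
  have deg: "\<forall>u\<in>V. card {w\<in>V. arcl T u w (l u) (l w)} \<ge> K \<and> card {w\<in>V. arcl T w u (l w) (l u)} \<ge> K"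
    using l unfolding Bad_def B1_def B1'_def by auto
  have ex: "\<exists>a\<in>P. \<exists>y\<in>Q. arcl T a y (l a) (l y)"
    if h: "P \<subseteq> V" "Q \<subseteq> V" "P \<inter> Q = {}" "card P = s" "card Q = s" for P Q
  proof (rule ccontr)
    assume no: "\<not> (\<exists>a\<in>P. \<exists>y\<in>Q. arcl T a y (l a) (l y))"
    have "card {v\<in>Q. l v = c} \<le> b" for c
    proof (cases "c \<in> L")
      case True
      then have "l \<notin> B3 c" using l unfolding Bad_def by auto
      then have "card {v\<in>V. l v = c} \<le> b" using l unfolding B3_def by auto
      moreover have "card {v\<in>Q. l v = c} \<le> card {v\<in>V. l v = c}" using h fV by (intro card_mono) auto
      ultimately show ?thesis by simp
    next
      case False
      then have "{v\<in>Q. l v = c} = {}" using l h unfolding \<Omega>_def by (auto simp: PiE_iff)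
      then have "card {v\<in>Q. l v = c} = 0" by (simp only: card.empty)
      then show ?thesis by simp
    qed
    then have "l \<in> B2 (P,Q)" using l no unfolding B2_def by auto
    moreover have "(P,Q) \<in> PQs" using h unfolding PQs_def by auto
    ultimately show False using l unfolding Bad_def by auto
  qed
  show ?thesis using l deg ex unfolding \<Omega>_def by blast
qed

lemma exists_r:
  fixes \<beta> p :: real
  assumes b0: "0 \<le> \<beta>" and bp: "\<beta> < p" and p1: "p \<le> 1"
  shows "\<exists>r. 0 < r \<and> r < 1 \<and> 1 - (1 - r) * p < r powr \<beta>"
proof -
  have p0: "p > 0" using b0 bp by linarith
  define r where "r = (\<beta> / p + 1) / 2"
  have bp1: "\<beta> / p < 1" using bp p0 by (simp add: divide_less_eq)
  have bp0: "\<beta> / p \<ge> 0" using b0 p0 by simp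
  define x where "x = \<beta> / p"
  have r0: "r > 0" "r < 1" "r > \<beta> / p" using bp1 bp0 unfolding r_def x_def[symmetric] by (auto simp: field_simps)
  have rp: "r * p > \<beta>" using r0(3) p0 by (simp add: divide_less_eq mult.commute)
  define a where "a = 1 - (1 - r) * p"
  have "(1 - r) * p \<le> (1 - r)" using r0 p1 by (intro mult_left_le) auto
  then have "(1 - r) * p < 1" using r0 by linarith
  then have a0: "a > 0" unfolding a_def by simp
  have la: "ln a \<le> - ((1 - r) * p)" using ln_le_minus_one[OF a0] unfolding a_def by simp
  have "ln (1 / r) \<le> 1 / r - 1" using ln_le_minus_one r0 by simp
  then have lr: "ln r \<ge> 1 - 1 / r" using r0 by (simp add: ln_div)
  have c0: "\<beta> * ln r \<ge> \<beta> * (1 - 1 / r)" using lr b0 by (simp add: mult_left_mono)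
  have c1: "\<beta> * (1 - 1 / r) = - ((1 - r) * (\<beta> / r))" using r0 by (simp add: field_simps)
  have c2: "- ((1 - r) * (\<beta> / r)) > - ((1 - r) * p)"
  proof -
    have "\<beta> / r < p" using rp r0 by (simp add: divide_less_eq mult.commute)
    then have "(1 - r) * (\<beta> / r) < (1 - r) * p" using r0 by (intro mult_strict_left_mono) auto
    then show ?thesis by simp
  qed
  have "ln a < \<beta> * ln r" using la c0 c1 c2 by linarith
  then have "exp (ln a) < exp (\<beta> * ln r)" by simp
  moreover have "r powr \<beta> = exp (\<beta> * ln r)" using r0 by (simp add: powr_def)
  ultimately have "a < r powr \<beta>" using a0 by simp
  then show ?thesis using r0 unfolding a_def by blast
qed

lemma part3_nat:
  fixes m t b n D s :: nat
  assumes m1: "m \<ge> 1" and tm: "2 ^ t \<le> 2 * m" and bm: "b * m \<le> 3 * n" and nD: "n \<le> D * s"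
    and mD: "2 * (4 ^ D * 6 * D) \<le> m" and s1: "s \<ge> 1"
  shows "2 * 4 ^ n * (2 ^ t * b) ^ s \<le> m ^ s * s ^ s"
proof -
  have "2 ^ t * b * m \<le> 2 * m * (b * m)" using tm by (simp add: mult.assoc mult.left_commute)
  also have "\<dots> \<le> 2 * m * (3 * n)" using bm by simp
  also have "\<dots> \<le> 2 * m * (3 * (D * s))" using nD by simp
  finally have "(2 ^ t * b) * m \<le> (6 * D * s) * m" by (simp add: algebra_simps)
  then have tb: "2 ^ t * b \<le> 6 * D * s" using m1 by simp
  have "(4::nat) ^ n \<le> 4 ^ (D * s)" using nD by (intro power_increasing) auto
  also have "\<dots> = (4 ^ D) ^ s" by (simp add: power_mult)
  finally have f4: "(4::nat) ^ n \<le> (4 ^ D) ^ s" .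
  have p2: "(2 ^ t * b) ^ s \<le> (6 * D * s) ^ s" by (rule power_mono[OF tb]) simp
  have "2 * 4 ^ n * (2 ^ t * b) ^ s \<le> 2 * (4 ^ D) ^ s * (6 * D * s) ^ s"
    using f4 p2 by (intro mult_mono) auto
  also have "\<dots> = 2 * (4 ^ D * 6 * D) ^ s * s ^ s" by (simp add: power_mult_distrib mult.assoc)
  also have "\<dots> \<le> 2 ^ s * (4 ^ D * 6 * D) ^ s * s ^ s"
  proof -
    have "(2::nat) ^ 1 \<le> 2 ^ s" using s1 by (intro power_increasing) auto
    then show ?thesis by (intro mult_right_mono) auto
  qed
  also have "\<dots> = (2 * (4 ^ D * 6 * D)) ^ s * s ^ s" by (simp only: power_mult_distrib mult.assoc)
  also have "\<dots> \<le> m ^ s * s ^ s" using mD by (intro mult_right_mono power_mono) auto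
  finally show ?thesis .
qed

lemma part3_real:
  fixes m t b n D s :: nat
  assumes m1: "m \<ge> 1" and tm: "2 ^ t \<le> 2 * m" and bm: "b * m \<le> 3 * n" and nD: "n \<le> D * s"
    and mD: "2 * (4 ^ D * 6 * D) \<le> m" and s1: "s \<ge> 1" and sn: "s \<le> n"
  shows "4 ^ n * (real (m ^ (n - s) * (2 ^ t * b) ^ s) / real (s ^ s)) \<le> real m ^ n / 2"
proof -
  have h: "real (2 * 4 ^ n * (2 ^ t * b) ^ s) \<le> real (m ^ s * s ^ s)"
    using part3_nat[OF m1 tm bm nD mD s1] by (simp only: of_nat_le_iff)
  have ss: "real (s ^ s) > 0" using s1 by simp
  have mn: "real m ^ n = real m ^ (n - s) * real m ^ s" using sn by (simp add: power_add[symmetric])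
  have "4 ^ n * (real (m ^ (n - s) * (2 ^ t * b) ^ s) / real (s ^ s))
      = real m ^ (n - s) * (real (2 * 4 ^ n * (2 ^ t * b) ^ s) / real (s ^ s)) / 2"
    by (simp add: field_simps)
  also have "\<dots> \<le> real m ^ (n - s) * (real (m ^ s * s ^ s) / real (s ^ s)) / 2"
    using h ss by (intro divide_right_mono mult_left_mono) (auto simp: divide_right_mono)
  also have "\<dots> = real m ^ n / 2" using ss mn by simp
  finally show ?thesis .
qed

lemma part2:
  fixes m n b :: nat
  assumes m1: "m \<ge> 1" and bdef: "b = 3 * n div m" and nm: "n \<ge> 8 * m * m"
  shows "real m * ((real m + 1) ^ n / 2 ^ (b+1)) < real m ^ n / 4"
proof -
  have mp: "real m > 0" using m1 by simp
  have e1: "(real m + 1) ^ n \<le> real m ^ n * exp (real n / real m)"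
  proof -
    have "real m + 1 = real m * (1 + 1 / real m)" using mp by (simp add: field_simps)
    then have "(real m + 1) ^ n = real m ^ n * (1 + 1 / real m) ^ n" by (simp add: power_mult_distrib)
    also have "(1 + 1 / real m) ^ n \<le> exp (1 / real m) ^ n"
      by (intro power_mono) (use mp in auto)
    also have "exp (1 / real m) ^ n = exp (real n / real m)" by (simp add: exp_of_nat_mult[symmetric])
    finally show ?thesis using mp by (simp add: mult_left_mono)
  qed
  have bm: "real (b + 1) * real m \<ge> 3 * real n"
  proof -
    have "3 * n < (3 * n div m + 1) * m" using m1
      by (metis add.commute div_mult_mod_eq mod_less_divisor mult.commute nat_add_left_cancel_less
                distrib_right mult_1 not_one_le_zero neq0_conv)
    then show ?thesis unfolding bdef by (metis of_nat_le_iff of_nat_mult of_nat_numeral less_imp_le)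
  qed
  have ln2: "ln (2::real) \<ge> 1/2"
  proof -
    have "ln (1/2::real) \<le> 1/2 - 1" using ln_le_minus_one[of "1/2::real"] by simp
    then show ?thesis by (simp add: ln_div)
  qed
  have e2: "(2::real) ^ (b+1) \<ge> exp (3 * real n / (2 * real m))"
  proof -
    have "exp (real (b+1) * ln 2) = exp (ln 2) ^ (b+1)" by (rule exp_of_nat_mult)
    then have "(2::real) ^ (b+1) = exp (real (b+1) * ln 2)" by simp
    moreover have "real (b+1) * ln 2 \<ge> 3 * real n / (2 * real m)"
    proof -
      have "real (b+1) \<ge> 3 * real n / real m" using bm mp by (simp add: divide_le_eq)
      then have "real (b+1) * ln 2 \<ge> (3 * real n / real m) * (1/2)"
        using ln2 by (intro mult_mono) auto
      then show ?thesis by simp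
    qed
    ultimately show ?thesis by simp
  qed
  have st1: "real m * ((real m + 1) ^ n / 2 ^ (b+1)) \<le> real m * (real m ^ n * exp (real n / real m) / exp (3 * real n / (2 * real m)))"
    using e1 e2 mp by (intro mult_left_mono frac_le) auto
  have st2: "exp (real n / real m) / exp (3 * real n / (2 * real m)) = exp (- (real n / (2 * real m)))"
    by (simp add: exp_diff[symmetric] field_simps)
  have st3: "real m * (real m ^ n * exp (real n / real m) / exp (3 * real n / (2 * real m))) = real m ^ n * (real m / exp (real n / (2 * real m)))"
    using st2 by (simp add: exp_minus field_simps)
  have st4: "real m ^ n * (real m / exp (real n / (2 * real m))) < real m ^ n * (1/4)"
  proof -
    have "real n / (2 * real m) \<ge> 4 * real m"
    proof -
      have "real n \<ge> 8 * real m * real m" using nm by (metis of_nat_le_iff of_nat_mult of_nat_numeral)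
      then show ?thesis using mp by (simp add: le_divide_eq)
    qed
    then have "exp (real n / (2 * real m)) \<ge> 1 + 4 * real m" using exp_ge_add_one_self
      by (meson add_left_mono order_trans)
    then have "real m / exp (real n / (2 * real m)) < 1/4" using mp
      by (simp add: divide_less_eq)
    then show ?thesis using mp by (intro mult_strict_left_mono) auto
  qed
  have "real m * ((real m + 1) ^ n / 2 ^ (b+1)) < real m ^ n * (1/4)" using st1 st3 st4 by linarith
  then show ?thesis by simp
qed

definition Hc :: "nat \<Rightarrow> real \<Rightarrow> nat \<Rightarrow> nat \<Rightarrow> nat \<Rightarrow> nat \<Rightarrow> bool" where
  "Hc t r n K s b \<longleftrightarrow>
     2 * real n * (real (2^t - 1::nat) * (real (2^t - 1::nat) - (1 - r) * real (2 ^ (t - 1) - 1::nat)) ^ (n - 1) / r ^ K)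
           + real (2^t - 1::nat) * ((real (2^t - 1::nat) + 1) ^ n / 2 ^ (b+1))
           + 4 ^ n * (real ((2^t - 1::nat) ^ (n - s) * (2 ^ t * b) ^ s) / real (s ^ s))
           < real (2^t - 1::nat) ^ n"

lemma part1:
  fixes m h n K :: nat and r \<beta> p \<theta> :: real
  assumes m1: "m \<ge> 1" and r: "0 < r" "r < 1" and b0: "\<beta> \<ge> 0"
    and pdef: "p = real h / real m" and hm: "h \<le> m"
    and thdef: "\<theta> = (1 - (1 - r) * p) / (r powr \<beta>)" and th0: "\<theta> > 0"
    and K: "real K \<le> \<beta> * real (n - 1)" and n1: "n \<ge> 1"
    and small: "real n * \<theta> ^ n < \<theta> / 8"
  shows "2 * real n * (real m * (real m - (1 - r) * real h) ^ (n - 1) / r ^ K) < real m ^ n / 4"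
proof -
  define \<rho> where "\<rho> = 1 - (1 - r) * p"
  have mp: "real m > 0" using m1 by simp
  have p01: "0 \<le> p" "p \<le> 1" using hm mp unfolding pdef by (auto simp: divide_le_eq)
  have "(1 - r) * p \<le> 1 - r" using p01 r by (intro mult_left_le) auto
  then have rho0: "\<rho> > 0" unfolding \<rho>_def using r by linarith
  have e1: "real m - (1 - r) * real h = real m * \<rho>" unfolding \<rho>_def pdef using mp by (simp add: field_simps)
  have e2: "real m * (real m * \<rho>) ^ (n - 1) = real m ^ n * \<rho> ^ (n - 1)"
  proof -
    have "real m * (real m * \<rho>) ^ (n - 1) = real m * real m ^ (n - 1) * \<rho> ^ (n - 1)" by (simp add: power_mult_distrib)
    also have "real m * real m ^ (n - 1) = real m ^ n" using n1 by (metis Suc_diff_1 less_le_trans zero_less_one power_Suc)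
    finally show ?thesis .
  qed
  have rb: "r powr \<beta> > 0" using r by simp
  have rK: "r ^ K \<ge> (r powr \<beta>) ^ (n - 1)"
  proof -
    have "r ^ K = r powr (real K)" using r by (simp add: powr_realpow)
    moreover have "r powr (\<beta> * real (n - 1)) \<le> r powr (real K)" using K r by (intro powr_mono') auto
    moreover have "r powr (\<beta> * real (n - 1)) = (r powr \<beta>) ^ (n - 1)"
      using rb by (simp add: powr_powr[symmetric] powr_realpow)
    ultimately show ?thesis by simp
  qed
  have "real m * (real m - (1 - r) * real h) ^ (n - 1) / r ^ K = real m ^ n * \<rho> ^ (n - 1) / r ^ K"
    using e1 e2 by simp
  also have "\<dots> \<le> real m ^ n * \<rho> ^ (n - 1) / (r powr \<beta>) ^ (n - 1)"
  proof (rule divide_left_mono)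
    show "(r powr \<beta>) ^ (n - 1) \<le> r ^ K" by (rule rK)
    show "0 \<le> real m ^ n * \<rho> ^ (n - 1)" using rho0 mp by simp
    show "0 < r ^ K * (r powr \<beta>) ^ (n - 1)" using r rb by simp
  qed
  also have "\<dots> = real m ^ n * \<theta> ^ (n - 1)" unfolding thdef \<rho>_def[symmetric] by (simp add: power_divide)
  finally have t1: "real m * (real m - (1 - r) * real h) ^ (n - 1) / r ^ K \<le> real m ^ n * \<theta> ^ (n - 1)" .
  have "\<theta> ^ n = \<theta> * \<theta> ^ (n - 1)" using n1 by (metis Suc_diff_1 less_le_trans zero_less_one power_Suc)
  then have "\<theta> * (real n * \<theta> ^ (n - 1)) < \<theta> * (1 / 8)" using small by (simp add: mult.left_commute)
  then have "real n * \<theta> ^ (n - 1) < 1 / 8" using th0 by (simp only: mult_less_cancel_left_pos)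
  then have "2 * real n * \<theta> ^ (n - 1) < 1 / 4" by simp
  then have "2 * real n * (real m ^ n * \<theta> ^ (n - 1)) < real m ^ n / 4" using mp
    by (simp add: algebra_simps)
  moreover have "2 * real n * (real m * (real m - (1 - r) * real h) ^ (n - 1) / r ^ K) \<le> 2 * real n * (real m ^ n * \<theta> ^ (n - 1))"
    using t1 by (intro mult_left_mono) auto
  ultimately show ?thesis by linarith
qed

lemma eps_ineq:
  fixes \<epsilon> :: real assumes "0 < \<epsilon>" "\<epsilon> \<le> 1"
  shows "1 / (2 + \<epsilon>) \<le> 1/2 - \<epsilon>/6"
proof -
  have "\<epsilon> * \<epsilon> \<le> \<epsilon>" using assms by (simp add: mult_left_le_one_le)
  then have "6 \<le> (2 + \<epsilon>) * (3 - \<epsilon>)" by (simp add: algebra_simps)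
  then have "1 \<le> (2 + \<epsilon>) * ((3 - \<epsilon>) / 6)" by simp
  then have "1 / (2 + \<epsilon>) \<le> (3 - \<epsilon>) / 6" using assms by (simp add: divide_le_eq mult.commute)
  then show ?thesis by simp
qed

lemma main_numeric:
  fixes \<epsilon> :: real assumes e: "0 < \<epsilon>" "\<epsilon> \<le> 1"
  shows "\<exists>D t r n0. 2 \<le> D \<and> 1 \<le> t \<and> 0 < r \<and> r < 1 \<and> 2 \<le> n0 \<and>
    (\<forall>n k. n0 \<le> n \<longrightarrow> 1 \<le> k \<longrightarrow> 2 * real k + 1 + \<epsilon> * real k \<le> real n \<longrightarrow>
        Hc t r n (k - 1 + (n div D + 1)) (n div D + 1) (3 * n div (2^t - 1)))"
proof -
  define D where "D = nat \<lceil>24 / \<epsilon>\<rceil>"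
  have rD: "real D \<ge> 24 / \<epsilon>" unfolding D_def by linarith
  have "24 / \<epsilon> \<ge> 24" using e by (simp add: le_divide_eq)
  then have D24: "real D \<ge> 24" using rD by linarith
  then have D2: "D \<ge> 2" by simp
  define M0 where "M0 = 12 * 4 ^ D * D"
  define t where "t = M0 + 1"
  define m where "m = (2::nat) ^ t - 1"
  define h where "h = (2::nat) ^ (t - 1) - 1"
  have t1: "t \<ge> 1" unfolding t_def by simp
  have "t < 2 ^ t" by simp
  then have mM0: "m \<ge> M0" unfolding m_def t_def by linarith
  have mD: "2 * (4 ^ D * 6 * D) \<le> m" using mM0 unfolding M0_def by simp
  have "M0 \<ge> 12 * D" unfolding M0_def by simp
  then have m1: "m \<ge> 1" using mM0 D2 by linarith
  have mh: "m = 2 * h + 1"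
  proof -
    have "(2::nat) ^ t = 2 * 2 ^ (t - 1)" using t1 by (metis Suc_diff_1 less_le_trans zero_less_one power_Suc)
    moreover have "(2::nat) ^ (t - 1) \<ge> 1" by simp
    ultimately show ?thesis unfolding m_def h_def by linarith
  qed
  have tm: "2 ^ t \<le> 2 * m" using m1 unfolding m_def by linarith
  have mp: "real m > 0" using m1 by simp
  define p where "p = real h / real m"
  define \<beta> where "\<beta> = 1 / (2 + \<epsilon>) + 2 / real D"
  have b0: "\<beta> \<ge> 0" unfolding \<beta>_def using e by simp
  have hm: "h \<le> m" using mh by simp
  have p1: "p \<le> 1" unfolding p_def using hm mp by (simp add: divide_le_eq)
  have bp: "\<beta> < p"
  proof -
    have pe: "p = 1/2 - 1 / (2 * real m)" unfolding p_def using mh mp by (simp add: field_simps)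
    have "real m \<ge> 12 * real D" using \<open>M0 \<ge> 12 * D\<close> mM0 by (metis of_nat_le_iff of_nat_mult of_nat_numeral le_trans)
    then have "real m \<ge> 12 * (24 / \<epsilon>)" using rD by linarith
    then have "288 / \<epsilon> \<le> real m" by simp
    then have "288 \<le> real m * \<epsilon>" using e by (simp add: divide_le_eq)
    then have "6 < real m * \<epsilon>" by linarith
    then have "real m > 6 / \<epsilon>" using e by (simp add: divide_less_eq)
    then have m6: "1 / (2 * real m) < \<epsilon> / 12" using e mp by (simp add: field_simps)
    have d2: "2 / real D \<le> \<epsilon> / 12"
    proof -
      have "2 / real D \<le> 2 / (24 / \<epsilon>)"
      proof (rule divide_left_mono)
        show "24 / \<epsilon> \<le> real D" by (rule rD)
        show "0 < real D * (24 / \<epsilon>)" using D24 e by simp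
      qed simp
      then show ?thesis by simp
    qed
    have "\<beta> \<le> 1/2 - \<epsilon>/6 + \<epsilon>/12" unfolding \<beta>_def using eps_ineq[OF e] d2 by linarith
    then show ?thesis using pe m6 by linarith
  qed
  obtain r where r: "0 < r" "r < 1" "1 - (1 - r) * p < r powr \<beta>" using exists_r[OF b0 bp p1] by blast
  define \<theta> where "\<theta> = (1 - (1 - r) * p) / (r powr \<beta>)"
  have rb: "r powr \<beta> > 0" using r by simp
  have "(1 - r) * p \<le> 1 - r" using p1 r \<open>h \<le> m\<close> mp unfolding p_def by (intro mult_left_le) auto
  then have num0: "1 - (1 - r) * p > 0" using r by linarith
  have th0: "\<theta> > 0" unfolding \<theta>_def using num0 rb by simp
  have th1: "\<theta> < 1" unfolding \<theta>_def using r(3) rb by simp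
  have "(\<lambda>n. real n * \<theta> ^ n) \<longlonglongrightarrow> 0" using th0 th1 by (intro powser_times_n_limit_0) simp
  then have "eventually (\<lambda>n. real n * \<theta> ^ n < \<theta> / 8) sequentially"
    using th0 by (intro order_tendstoD(2)) auto
  then obtain N1 where N1: "\<And>n. n \<ge> N1 \<Longrightarrow> real n * \<theta> ^ n < \<theta> / 8"
    unfolding eventually_sequentially by blast
  define n0 where "n0 = max (max N1 2) (8 * m * m)"
  have main: "Hc t r n (k - 1 + (n div D + 1)) (n div D + 1) (3 * n div (2^t - 1))"
    if n: "n0 \<le> n" and k: "1 \<le> k" and nk: "2 * real k + 1 + \<epsilon> * real k \<le> real n" for n k
  proof -
    define s where "s = n div D + 1"
    define K where "K = k - 1 + s"
    define b where "b = 3 * n div m"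
    have n2: "n \<ge> 2" and nN1: "n \<ge> N1" and n8: "n \<ge> 8 * m * m" using n unfolding n0_def by auto
    have s1: "s \<ge> 1" unfolding s_def by simp
    have nD: "n \<le> D * s"
    proof -
      have eq: "D * (n div D) + n mod D = n" by (rule mult_div_mod_eq)
      have "n mod D < D" using D2 by simp
      then have "n \<le> D * (n div D) + D" using eq by linarith
      then show ?thesis unfolding s_def by (simp add: algebra_simps)
    qed
    have sn: "s \<le> n"
    proof -
      have "n div D \<le> n div 2" using D2 by (simp add: div_le_mono2)
      moreover have "n div 2 < n" using n2 by simp
      ultimately show ?thesis unfolding s_def by simp
    qed
    have Kb: "real K \<le> \<beta> * real (n - 1)"
    proof -
      have rn1: "real (n - 1) = real n - 1" using n2 by simp
      have "(2 + \<epsilon>) * real k \<le> real n - 1" using nk by (simp add: algebra_simps)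
      then have kb: "real k \<le> (real n - 1) / (2 + \<epsilon>)" using e by (simp add: le_divide_eq mult.commute)
      have "real D * real (n div D) \<le> real n"
        by (metis of_nat_le_iff of_nat_mult times_div_less_eq_dividend)
      then have dv: "real (n div D) \<le> real n / real D" using D2 by (simp add: le_divide_eq mult.commute)
      have "real n / real D \<le> 2 * (real n - 1) / real D" using n2 D2 by (intro divide_right_mono) auto
      then have "real K \<le> (real n - 1) / (2 + \<epsilon>) + 2 * (real n - 1) / real D"
        unfolding K_def s_def using kb dv k by (simp add: of_nat_diff)
      also have "\<dots> = \<beta> * (real n - 1)" unfolding \<beta>_def by (simp add: algebra_simps)
      finally show ?thesis using rn1 by simp
    qed
    have T1: "2 * real n * (real m * (real m - (1 - r) * real h) ^ (n - 1) / r ^ K) < real m ^ n / 4"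
      by (rule part1[OF m1 r(1,2) b0 p_def hm \<theta>_def th0 Kb]) (use n2 N1[OF nN1] in auto)
    have T2: "real m * ((real m + 1) ^ n / 2 ^ (b+1)) < real m ^ n / 4"
      by (rule part2[OF m1 b_def n8])
    have bm: "b * m \<le> 3 * n" unfolding b_def by simp
    have T3: "4 ^ n * (real (m ^ (n - s) * (2 ^ t * b) ^ s) / real (s ^ s)) \<le> real m ^ n / 2"
      by (rule part3_real[OF m1 tm bm nD mD s1 sn])
    have "2 * real n * (real m * (real m - (1 - r) * real h) ^ (n - 1) / r ^ K)
           + real m * ((real m + 1) ^ n / 2 ^ (b+1))
           + 4 ^ n * (real (m ^ (n - s) * (2 ^ t * b) ^ s) / real (s ^ s)) < real m ^ n"
      using T1 T2 T3 by linarith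
    then show ?thesis unfolding Hc_def K_def[symmetric] s_def[symmetric] m_def[symmetric] h_def[symmetric] b_def[symmetric] .
  qed
  show ?thesis
    apply (rule exI[of _ D], rule exI[of _ t], rule exI[of _ r], rule exI[of _ n0])
    using D2 t1 r main unfolding n0_def by auto
qed

lemma labels_invert:
  assumes lsub: "\<forall>v\<in>V. l v \<subseteq> {0..<t}" and u: "u \<in> V" and v: "v \<in> V"
  shows "(u,v) \<in> invert_seq (map (\<lambda>i. {w\<in>V. i \<in> l w}) [0..<t]) T \<longleftrightarrow> arcl T u v (l u) (l v)"
proof -
  have "length (filter (\<lambda>X. u\<in>X \<and> v\<in>X) (map (\<lambda>i. {w\<in>V. i \<in> l w}) [0..<t]))
      = length (filter (\<lambda>i. i \<in> l u \<and> i \<in> l v) [0..<t])"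
    using u v by (simp add: filter_map comp_def)
  also have "\<dots> = card ({i. i \<in> l u \<and> i \<in> l v} \<inter> set [0..<t])" by (rule distinct_length_filter) simp
  also have "{i. i \<in> l u \<and> i \<in> l v} \<inter> set [0..<t] = l u \<inter> l v" using lsub u by auto
  finally show ?thesis unfolding invert_seq_def fold_mem arcl_def by simp
qed

lemma main_large:
  fixes \<epsilon> :: real assumes e: "0 < \<epsilon>" "\<epsilon> \<le> 1"
  shows "\<exists>t n0. \<forall>k (V::nat set) T. 1 \<le> k \<longrightarrow> finite V \<longrightarrow> tournament V T \<longrightarrow> n0 \<le> card V \<longrightarrow>
     2 * real k + 1 + \<epsilon> * real k \<le> real (card V) \<longrightarrow>
     (\<exists>Xs. set Xs \<subseteq> Pow V \<and> length Xs = t \<and> k_strong k V (invert_seq Xs T))"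
proof -
  obtain D t r n0 where D2: "2 \<le> D" and t1: "1 \<le> t" and r: "0 < r" "r < 1" and n02: "2 \<le> n0"
    and H: "\<And>n k. n0 \<le> n \<Longrightarrow> 1 \<le> k \<Longrightarrow> 2 * real k + 1 + \<epsilon> * real k \<le> real n \<Longrightarrow>
        Hc t r n (k - 1 + (n div D + 1)) (n div D + 1) (3 * n div (2^t - 1))"
    using main_numeric[OF e] by blast
  have "\<forall>k (V::nat set) T. 1 \<le> k \<longrightarrow> finite V \<longrightarrow> tournament V T \<longrightarrow> n0 \<le> card V \<longrightarrow>
     2 * real k + 1 + \<epsilon> * real k \<le> real (card V) \<longrightarrow>
     (\<exists>Xs. set Xs \<subseteq> Pow V \<and> length Xs = t \<and> k_strong k V (invert_seq Xs T))"
  proof (intro allI impI)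
    fix k and V :: "nat set" and T
    assume k: "1 \<le> k" and fV: "finite V" and tour: "tournament V T" and n0: "n0 \<le> card V"
      and nk: "2 * real k + 1 + \<epsilon> * real k \<le> real (card V)"
    define n where "n = card V"
    define s where "s = n div D + 1"
    define K where "K = k - 1 + s"
    define b where "b = 3 * n div (2^t - 1)"
    define L where "L = Pow {0..<t} - {{}}"
    have cL: "card L = 2 ^ t - 1" unfolding L_def by (simp add: card_Pow)
    have Hn: "Hc t r n K s b" using H[OF _ k] n0 nk unfolding n_def K_def s_def b_def by simp
    have s1: "s \<ge> 1" unfolding s_def by simp
    have Hg: "2 * real (card V) * (real (card L) * (real (card L) - (1 - r) * real (2 ^ (t - 1) - 1)) ^ (card V - 1) / r ^ K)
           + real (card L) * ((real (card L) + 1) ^ card V / 2 ^ (b+1))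
           + 4 ^ card V * (real (card L ^ (card V - s) * (2 ^ t * b) ^ s) / real (s ^ s))
           < real (card L) ^ card V"
      using Hn unfolding Hc_def cL n_def by simp
    obtain l where l: "l \<in> PiE V (\<lambda>_. L)"
      and deg: "\<forall>u\<in>V. card {w\<in>V. arcl T u w (l u) (l w)} \<ge> K \<and> card {w\<in>V. arcl T w u (l w) (l u)} \<ge> K"
      and ex: "\<forall>P Q. P \<subseteq> V \<longrightarrow> Q \<subseteq> V \<longrightarrow> P \<inter> Q = {} \<longrightarrow> card P = s \<longrightarrow> card Q = s \<longrightarrow> (\<exists>a\<in>P. \<exists>y\<in>Q. arcl T a y (l a) (l y))"
      using exists_good[OF fV tour L_def r s1 t1 Hg] by blast
    have lsub: "\<forall>v\<in>V. l v \<subseteq> {0..<t}" using l unfolding L_def by (auto simp: PiE_iff)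
    define Xs where "Xs = map (\<lambda>i. {w\<in>V. i \<in> l w}) [0..<t]"
    have XsV: "set Xs \<subseteq> Pow V" unfolding Xs_def by auto
    have lenX: "length Xs = t" unfolding Xs_def by simp
    have arc: "\<And>u v. u \<in> V \<Longrightarrow> v \<in> V \<Longrightarrow> (u,v) \<in> invert_seq Xs T \<longleftrightarrow> arcl T u v (l u) (l v)"
      unfolding Xs_def using labels_invert[OF lsub] by blast
    have cV: "card V \<ge> k + 1"
    proof -
      have "\<epsilon> * real k \<ge> 0" using e by simp
      then have "real (k + 1) \<le> real (card V)" using nk k by simp
      then show ?thesis by (simp only: of_nat_le_iff)
    qed
    have "k_strong k V (invert_seq Xs T)"
    proof (rule kstrong_suff[OF fV k cV])
      show "\<forall>u\<in>V. k - 1 + s \<le> card {w\<in>V. (u,w) \<in> invert_seq Xs T} \<and> k - 1 + s \<le> card {w\<in>V. (w,u) \<in> invert_seq Xs T}"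
      proof
        fix u assume u: "u \<in> V"
        have "{w\<in>V. (u,w) \<in> invert_seq Xs T} = {w\<in>V. arcl T u w (l u) (l w)}" using arc u by auto
        moreover have "{w\<in>V. (w,u) \<in> invert_seq Xs T} = {w\<in>V. arcl T w u (l w) (l u)}" using arc u by auto
        ultimately show "k - 1 + s \<le> card {w\<in>V. (u,w) \<in> invert_seq Xs T} \<and> k - 1 + s \<le> card {w\<in>V. (w,u) \<in> invert_seq Xs T}"
          using deg u unfolding K_def by simp
      qed
      show "\<forall>P Q. P \<subseteq> V \<longrightarrow> Q \<subseteq> V \<longrightarrow> P \<inter> Q = {} \<longrightarrow> card P = s \<longrightarrow> card Q = s \<longrightarrow> (\<exists>a\<in>P. \<exists>b\<in>Q. (a,b) \<in> invert_seq Xs T)"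
      proof (intro allI impI)
        fix P Q assume h: "P \<subseteq> V" "Q \<subseteq> V" "P \<inter> Q = {}" "card P = s" "card Q = s"
        then obtain a y where "a \<in> P" "y \<in> Q" "arcl T a y (l a) (l y)" using ex by blast
        then show "\<exists>a\<in>P. \<exists>b\<in>Q. (a,b) \<in> invert_seq Xs T" using arc h by blast
      qed
    qed
    then show "\<exists>Xs. set Xs \<subseteq> Pow V \<and> length Xs = t \<and> k_strong k V (invert_seq Xs T)"
      using XsV lenX by blast
  qed
  then show ?thesis by blast
qed

lemma circ_anti_aux:
  fixes i j n :: nat
  assumes "i < n" "j < n" "i < j"
  shows "(j + n - i) mod n + (i + n - j) mod n = n"
proof -
  have e: "j + n - i = (j - i) + n" using assms by simp
  have "(j + n - i) mod n = ((j - i) + n) mod n" by (subst e) (rule refl)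
  also have "\<dots> = (j - i) mod n" by (rule mod_add_self2)
  also have "\<dots> = j - i" using assms by simp
  finally have a: "(j + n - i) mod n = j - i" .
  have "i + n - j < n" using assms by simp
  then have b: "(i + n - j) mod n = i + n - j" by simp
  show ?thesis using a b assms by simp
qed

lemma circ_anti:
  fixes i j n :: nat
  assumes i: "i < n" and j: "j < n"
  shows "\<not> ((j + n - i) mod n \<in> {1..(n - 1) div 2} \<and> (i + n - j) mod n \<in> {1..(n - 1) div 2})"
proof
  assume h: "(j + n - i) mod n \<in> {1..(n - 1) div 2} \<and> (i + n - j) mod n \<in> {1..(n - 1) div 2}"
  have hn: "2 * ((n - 1) div 2) < n" using i by linarith
  consider "i = j" | "i < j" | "j < i" by linarith
  then show False
  proof cases
    case 1 then show ?thesis using h by simp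
  next
    case 2 then show ?thesis using circ_anti_aux[OF i j 2] h hn by auto
  next
    case 3 then show ?thesis using circ_anti_aux[OF j i 3] h hn by auto
  qed
qed

lemma small_case:
  fixes V :: "nat set"
  assumes fV: "finite V" and tour: "tournament V T" and k1: "k \<ge> 1" and nk: "2 * k + 1 \<le> card V"
  shows "\<exists>Xs. set Xs \<subseteq> Pow V \<and> length Xs \<le> 2 ^ card V \<and> k_strong k V (invert_seq Xs T)"
proof -
  define n where "n = card V"
  obtain g where g: "bij_betw g {0..<card V} V" using ex_bij_betw_nat_finite[OF fV] by blast
  have kh: "k \<le> (card V - 1) div 2" using nk by linarith
  define R where "R = {(g i, g j) | i j. i < card V \<and> j < card V \<and> (j + card V - i) mod card V \<in> {1..(card V - 1) div 2}}"
  have Rk: "k_strong k V R" unfolding R_def by (rule circ_kstrong[OF fV g kh k1])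
  have gV: "\<And>i. i < card V \<Longrightarrow> g i \<in> V" using g unfolding bij_betw_def by auto
  have ginj: "\<And>i j. i < card V \<Longrightarrow> j < card V \<Longrightarrow> g i = g j \<Longrightarrow> i = j"
    using g unfolding bij_betw_def inj_on_def by auto
  have RV: "R \<subseteq> V \<times> V" unfolding R_def using gV by auto
  have anti: "\<forall>u v. (u,v)\<in>R \<longrightarrow> (v,u)\<notin>R"
  proof (intro allI impI notI)
    fix u v assume uv: "(u,v) \<in> R" and vu: "(v,u) \<in> R"
    obtain i j where ij: "u = g i" "v = g j" "i < card V" "j < card V"
      "(j + card V - i) mod card V \<in> {1..(card V - 1) div 2}" using uv unfolding R_def by blast
    obtain i' j' where ij': "v = g i'" "u = g j'" "i' < card V" "j' < card V"
      "(j' + card V - i') mod card V \<in> {1..(card V - 1) div 2}" using vu unfolding R_def by blast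
    have "i' = j" "j' = i" using ginj ij ij' by metis+
    then show False using circ_anti[OF ij(3,4)] ij(5) ij'(5) by simp
  qed
  obtain Xs where Xs: "set Xs \<subseteq> Pow V" "length Xs \<le> 2 ^ card V" "R \<subseteq> invert_seq Xs T"
    using reach_target[OF fV tour RV anti] by blast
  have "k_strong k V (invert_seq Xs T)" by (rule k_strong_mono[OF Rk Xs(3)])
  then show ?thesis using Xs by blast
qed

lemma sinv_le:
  assumes "set Xs \<subseteq> Pow V" "k_strong k V (invert_seq Xs A)"
  shows "sinv k V A \<le> enat (length Xs)"
  unfolding sinv_def by (rule Inf_lower) (use assms in blast)

lemma per_eps:
  fixes \<epsilon> :: real assumes e: "\<epsilon> > 0"
  shows "\<exists>N::nat. \<forall>k::nat. \<forall>(V::nat set) T. k \<ge> 1 \<longrightarrow> finite V \<longrightarrow> tournament V T \<longrightarrow>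
     real (card V) \<ge> 2 * real k + 1 + \<epsilon> * real k \<longrightarrow> sinv k V T \<le> enat N"
proof -
  define e' where "e' = min \<epsilon> 1"
  have e': "0 < e'" "e' \<le> 1" using e unfolding e'_def by auto
  obtain t n0 where TN: "\<forall>k (V::nat set) T. 1 \<le> k \<longrightarrow> finite V \<longrightarrow> tournament V T \<longrightarrow> n0 \<le> card V \<longrightarrow>
     2 * real k + 1 + e' * real k \<le> real (card V) \<longrightarrow>
     (\<exists>Xs. set Xs \<subseteq> Pow V \<and> length Xs = t \<and> k_strong k V (invert_seq Xs T))"
    using main_large[OF e'] by (elim exE) (rule that)
  define N where "N = max t (2 ^ n0)"
  have "sinv k V T \<le> enat N" if k: "k \<ge> 1" and fV: "finite V" and tour: "tournament V T"
    and nk: "real (card V) \<ge> 2 * real k + 1 + \<epsilon> * real k" for k and V :: "nat set" and T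
  proof -
    have "e' * real k \<le> \<epsilon> * real k" unfolding e'_def by (intro mult_right_mono) auto
    then have nk': "2 * real k + 1 + e' * real k \<le> real (card V)" using nk by linarith
    show ?thesis
    proof (cases "n0 \<le> card V")
      case True
      then obtain Xs where Xs: "set Xs \<subseteq> Pow V" "length Xs = t" "k_strong k V (invert_seq Xs T)"
        using TN[rule_format, OF k fV tour True nk'] by (elim exE conjE) (rule that)
      have "sinv k V T \<le> enat (length Xs)" by (rule sinv_le[OF Xs(1,3)])
      also have "\<dots> \<le> enat N" using Xs(2) unfolding N_def by simp
      finally show ?thesis .
    next
      case False
      have "\<epsilon> * real k \<ge> 0" using e by simp
      then have "real (2 * k + 1) \<le> real (card V)" using nk by simp
      then have nk2: "2 * k + 1 \<le> card V" by (simp only: of_nat_le_iff)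
      obtain Xs where Xs: "set Xs \<subseteq> Pow V" "length Xs \<le> 2 ^ card V" "k_strong k V (invert_seq Xs T)"
        using small_case[OF fV tour k nk2] by blast
      have "sinv k V T \<le> enat (length Xs)" by (rule sinv_le[OF Xs(1,3)])
      also have "length Xs \<le> N"
      proof -
        have "(2::nat) ^ card V \<le> 2 ^ n0" using False by (intro power_increasing) auto
        then show ?thesis using Xs(2) unfolding N_def by linarith
      qed
      then have "enat (length Xs) \<le> enat N" by simp
      finally show ?thesis .
    qed
  qed
  then show ?thesis by blast
qed

theorem theorem1p15:
  shows "\<exists>f :: real \<Rightarrow> nat. \<forall>\<epsilon>::real. \<forall>k::nat. \<forall>(V::nat set) T.
     \<epsilon> > 0 \<longrightarrow> k \<ge> 1 \<longrightarrow> finite V \<longrightarrow> tournament V T \<longrightarrow>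
     real (card V) \<ge> 2 * real k + 1 + \<epsilon> * real k \<longrightarrow>
     sinv k V T \<le> enat (f \<epsilon>)"
proof -
  have "\<forall>\<epsilon>::real. \<exists>N::nat. \<epsilon> > 0 \<longrightarrow> (\<forall>k::nat. \<forall>(V::nat set) T. k \<ge> 1 \<longrightarrow> finite V \<longrightarrow> tournament V T \<longrightarrow>
     real (card V) \<ge> 2 * real k + 1 + \<epsilon> * real k \<longrightarrow> sinv k V T \<le> enat N)"
  proof
    fix \<epsilon> :: real
    show "\<exists>N::nat. \<epsilon> > 0 \<longrightarrow> (\<forall>k::nat. \<forall>(V::nat set) T. k \<ge> 1 \<longrightarrow> finite V \<longrightarrow> tournament V T \<longrightarrow>
     real (card V) \<ge> 2 * real k + 1 + \<epsilon> * real k \<longrightarrow> sinv k V T \<le> enat N)"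
    proof (cases "\<epsilon> > 0")
      case True
      then obtain N where "\<forall>k::nat. \<forall>(V::nat set) T. k \<ge> 1 \<longrightarrow> finite V \<longrightarrow> tournament V T \<longrightarrow>
         real (card V) \<ge> 2 * real k + 1 + \<epsilon> * real k \<longrightarrow> sinv k V T \<le> enat N"
        using per_eps[OF True] by (elim exE) (rule that)
      then show ?thesis by (intro exI[of _ N] impI)
    next
      case False
      then show ?thesis by simp
    qed
  qed
  then obtain f :: "real \<Rightarrow> nat" where f: "\<forall>\<epsilon>. \<epsilon> > 0 \<longrightarrow> (\<forall>k::nat. \<forall>(V::nat set) T. k \<ge> 1 \<longrightarrow> finite V \<longrightarrow> tournament V T \<longrightarrow>
     real (card V) \<ge> 2 * real k + 1 + \<epsilon> * real k \<longrightarrow> sinv k V T \<le> enat (f \<epsilon>))"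
    by (elim choice[THEN exE]) (rule that)
  show ?thesis
  proof (intro exI[of _ f] allI impI)
    fix \<epsilon> :: real and k :: nat and V :: "nat set" and T
    assume h: "\<epsilon> > 0" "k \<ge> 1" "finite V" "tournament V T" "real (card V) \<ge> 2 * real k + 1 + \<epsilon> * real k"
    show "sinv k V T \<le> enat (f \<epsilon>)" using f h by blast
  qed
qed

end
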